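(* Let $T>0$ and $u\in L^\infty(\mathbb{R})$ real-valued and $T$-periodic. For all $s>0$ and fixed $x\in\mathbb{R}$, $$\psi^+(x,\lambda)=e^{i\sqrt\lambda x}\Big(1+\frac{1}{2i\sqrt\lambda}\int_0^xu(t)\,dt+O(\lambda^{-1})\Big),\quad \psi^-(x,\lambda)=e^{-i\sqrt\lambda x}\Big(1-\frac{1}{2i\sqrt\lambda}\int_0^xu(t)\,dt+O(\lambda^{-1})\Big),$$ $$\partial_x\psi^+(x,\lambda)=e^{i\sqrt\lambda x}\big(i\sqrt\lambda+O(1)\big),\qquad \partial_x\psi^-(x,\lambda)=e^{-i\sqrt\lambda x}\big(-i\sqrt\lambda+O(1)\big),$$ as $\lambda\to\infty$ with $\lambda\in\Omega_s$.
   Context: $y_1,y_2$: solutions of $-y''+uy=\lambda y$ with $y_1(0)=1,y_1'(0)=0,y_2(0)=0,y_2'(0)=1$; $\Delta(\lambda)=y_1(T,\lambda)+y_2'(T,\lambda)$; $\sigma(L)=\{\lambda\in\mathbb{R}:\Delta(\lambda)\in[-2,2]\}$. $\rho(\lambda)$: root of $\rho^2-\Delta(\lambda)\rho+1=0$ analytic on $\mathbb{C}\setminus\sigma(L)$ with $|\rho|<1$ there. Bloch--Floquet solutions $\psi^\pm(x,\lambda)=y_1(x,\lambda)+\frac{\rho(\lambda)^{\pm1}-y_1(T,\lambda)}{y_2(T,\lambda)}y_2(x,\lambda)$. $\sqrt\lambda$ is defined with $\arg\lambda\in[0,2\pi)$ (so it lies in the upper half plane off $[0,\infty)$); $\Omega_s=\{\lambda\in\mathbb{C}:s<\arg\lambda<2\pi-s\}$.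 *)

theory Defs
  imports "HOL-Analysis.Analysis" "HOL-Library.Landau_Symbols"
begin

text \<open>Square root with the branch cut along [0,\<infinity>): arg of the argument taken in [0,2\<pi>),
  so the root has arg in [0,\<pi>).\<close>
definition sqrt_cut :: "complex \<Rightarrow> complex" where
  "sqrt_cut z = (if Im z \<ge> 0 then csqrt z else - csqrt z)"

definition arg2pi :: "complex \<Rightarrow> real" where
  "arg2pi z = (if Arg z < 0 then Arg z + 2 * pi else Arg z)"

definition Omega :: "real \<Rightarrow> complex set" where
  "Omega s = {z. s < arg2pi z \<and> arg2pi z < 2 * pi - s}"

text \<open>Hill discriminant and spectrum, given the fundamental solutions
  (y1 x \<lambda>, its x-derivative y1' x \<lambda>) and (y2, y2').\<close>
definition Delta :: "real \<Rightarrow> (real \<Rightarrow> complex \<Rightarrow> complex) \<Rightarrow> (real \<Rightarrow> complex \<Rightarrow> complex)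
    \<Rightarrow> complex \<Rightarrow> complex" where
  "Delta T y1 y2' l = y1 T l + y2' T l"

definition spec :: "real \<Rightarrow> (real \<Rightarrow> complex \<Rightarrow> complex) \<Rightarrow> (real \<Rightarrow> complex \<Rightarrow> complex)
    \<Rightarrow> complex set" where
  "spec T y1 y2' = {complex_of_real r | r. Delta T y1 y2' (complex_of_real r)
                     \<in> complex_of_real ` {-2..2}}"

text \<open>Solution of -y'' + u y = \<lambda> y with y(0)=a, y'(0)=b, in the Caratheodory sense
  (u only bounded measurable): y, y' continuous and
  y x = a + \<integral>_0^x y', y' x = b + \<integral>_0^x (u - \<lambda>) y.\<close>
definition is_sol :: "(real \<Rightarrow> real) \<Rightarrow> complex \<Rightarrow> complex \<Rightarrow> complex
    \<Rightarrow> (real \<Rightarrow> complex) \<Rightarrow> (real \<Rightarrow> complex) \<Rightarrow> bool" where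
  "is_sol u l a b y y' \<longleftrightarrow> continuous_on UNIV y \<and> continuous_on UNIV y' \<and>
     (\<forall>x. y x = a + (LBINT t=ereal 0..ereal x. y' t)) \<and>
     (\<forall>x. y' x = b + (LBINT t=ereal 0..ereal x. (complex_of_real (u t) - l) * y t))"

definition psi_plus where
  "psi_plus T rho y1 y2 x l = y1 x l + (rho l - y1 T l) / y2 T l * y2 x l"

definition psi_minus where
  "psi_minus T rho y1 y2 x l = y1 x l + (inverse (rho l) - y1 T l) / y2 T l * y2 x l"

definition dpsi_plus where
  "dpsi_plus T rho y1 y2 y1' y2' x l = y1' x l + (rho l - y1 T l) / y2 T l * y2' x l"

definition dpsi_minus where
  "dpsi_minus T rho y1 y2 y1' y2' x l = y1' x l + (inverse (rho l) - y1 T l) / y2 T l * y2' x l"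

definition Omega_filter :: "real \<Rightarrow> complex filter" where
  "Omega_filter s = inf at_infinity (principal (Omega s))"

end

theory Submission
  imports Defs
begin

definition J :: "real \<Rightarrow> real \<Rightarrow> (real \<Rightarrow> complex) \<Rightarrow> complex" where
  "J a b f = (LBINT t=ereal a..ereal b. f t)"

definition loc :: "(real \<Rightarrow> complex) \<Rightarrow> bool" where
  "loc f \<longleftrightarrow> f \<in> borel_measurable borel \<and> (\<forall>a b. \<exists>C. \<forall>t\<in>{a..b}. norm (f t) \<le> C)"

lemma loc_cont: "continuous_on UNIV f \<Longrightarrow> loc f"
proof -
  assume c: "continuous_on UNIV f"
  have "\<exists>C. \<forall>t\<in>{a..b}. norm (f t) \<le> C" for a b
  proof -
    have "compact (f ` {a..b})"
      by (rule compact_continuous_image[OF continuous_on_subset[OF c] compact_Icc]) auto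
    then obtain C where "\<forall>y\<in>f`{a..b}. norm y \<le> C" using compact_imp_bounded bounded_iff by metis
    then show ?thesis by auto
  qed
  with c show ?thesis unfolding loc_def by (auto intro: borel_measurable_continuous_onI)
qed

lemma loc_add: "loc f \<Longrightarrow> loc g \<Longrightarrow> loc (\<lambda>t. f t + g t)"
  unfolding loc_def
proof (elim conjE, intro conjI allI)
  fix a b assume "\<forall>a b. \<exists>C. \<forall>t\<in>{a..b}. norm (f t) \<le> C" "\<forall>a b. \<exists>C. \<forall>t\<in>{a..b}. norm (g t) \<le> C"
  then obtain C1 C2 where "\<forall>t\<in>{a..b}. norm (f t) \<le> C1" "\<forall>t\<in>{a..b}. norm (g t) \<le> C2" by metis
  then show "\<exists>C. \<forall>t\<in>{a..b}. norm (f t + g t) \<le> C"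
    by (intro exI[of _ "C1 + C2"]) (auto intro: norm_triangle_le add_mono)
qed auto

lemma loc_mult: "loc f \<Longrightarrow> loc g \<Longrightarrow> loc (\<lambda>t. f t * g t)"
  unfolding loc_def
proof (elim conjE, intro conjI allI)
  fix a b assume "\<forall>a b. \<exists>C. \<forall>t\<in>{a..b}. norm (f t) \<le> C" "\<forall>a b. \<exists>C. \<forall>t\<in>{a..b}. norm (g t) \<le> C"
  then obtain C1 C2 where c: "\<forall>t\<in>{a..b}. norm (f t) \<le> C1" "\<forall>t\<in>{a..b}. norm (g t) \<le> C2" by metis
  show "\<exists>C. \<forall>t\<in>{a..b}. norm (f t * g t) \<le> C"
  proof (intro exI[of _ "max C1 0 * max C2 0"] ballI)
    fix t assume "t \<in> {a..b}"
    then have "norm (f t) \<le> max C1 0" "norm (g t) \<le> max C2 0" using c by force+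
    then show "norm (f t * g t) \<le> max C1 0 * max C2 0"
      by (simp add: norm_mult mult_mono)
  qed
qed auto

lemma loc_cmult: "loc f \<Longrightarrow> loc (\<lambda>t. c * f t)"
  by (rule loc_mult[OF loc_cont, of "\<lambda>_. c", simplified]) auto

lemma loc_minus: "loc f \<Longrightarrow> loc (\<lambda>t. - f t)"
  using loc_cmult[of f "-1"] by simp

lemma loc_diff: "loc f \<Longrightarrow> loc g \<Longrightarrow> loc (\<lambda>t. f t - g t)"
  using loc_add[of f "\<lambda>t. - g t"] loc_minus[of g] by simp

lemma loc_bdd: "f \<in> borel_measurable borel \<Longrightarrow> (\<And>t. norm (f t) \<le> C) \<Longrightarrow> loc f"
  unfolding loc_def by auto

lemma loc_set_integrable: "loc f \<Longrightarrow> set_integrable lborel {a..b} f"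
proof -
  assume l: "loc f"
  then obtain C where C: "\<forall>t\<in>{a..b}. norm (f t) \<le> C" unfolding loc_def by metis
  show ?thesis
  proof (rule set_integrable_bound[of lborel "{a..b}" "\<lambda>_. C"])
    show "set_integrable lborel {a..b} (\<lambda>_. C)"
      by (rule borel_integrable_atLeastAtMost') (auto intro: continuous_on_const)
    show "set_borel_measurable lborel {a..b} f"
    proof -
      have [measurable]: "f \<in> borel_measurable borel" using l unfolding loc_def by auto
      show ?thesis unfolding set_borel_measurable_def by measurable
    qed
    show "AE x in lborel. x \<in> {a..b} \<longrightarrow> norm (f x) \<le> norm C"
      using C by (auto intro!: AE_I2 intro: order_trans[OF _ abs_ge_self])
  qed
qed

lemma loc_integrable: "loc f \<Longrightarrow> interval_lebesgue_integrable lborel (ereal a) (ereal b) f"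
proof -
  assume l: "loc f"
  have 1: "set_integrable lborel {a<..<b} f"
    by (rule set_integrable_subset[OF loc_set_integrable[OF l, of a b]]) auto
  have 2: "set_integrable lborel {b<..<a} f"
    by (rule set_integrable_subset[OF loc_set_integrable[OF l, of b a]]) auto
  show ?thesis unfolding interval_lebesgue_integrable_def using 1 2 by simp
qed

lemma J_add: "loc f \<Longrightarrow> loc g \<Longrightarrow> J a b (\<lambda>t. f t + g t) = J a b f + J a b g"
  unfolding J_def by (intro interval_lebesgue_integral_add(2) loc_integrable)

lemma J_diff: "loc f \<Longrightarrow> loc g \<Longrightarrow> J a b (\<lambda>t. f t - g t) = J a b f - J a b g"
  unfolding J_def by (intro interval_lebesgue_integral_diff(2) loc_integrable)

lemma J_cmult: "J a b (\<lambda>t. c * f t) = c * J a b f"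
  unfolding J_def by simp

lemma J_multc: "J a b (\<lambda>t. f t * c) = J a b f * c"
  unfolding J_def by simp

lemma J_minus: "J a b (\<lambda>t. - f t) = - J a b f"
  unfolding J_def by (rule interval_lebesgue_integral_uminus)

lemma J_zero[simp]: "J a a f = 0"
  unfolding J_def by (simp add: interval_lebesgue_integral_def set_lebesgue_integral_def)

lemma J_rev: "J a b f = - J b a f"
  unfolding J_def by (rule interval_integral_endpoints_reverse)

lemma J_split: "loc f \<Longrightarrow> J a b f + J b c f = J a c f"
  unfolding J_def
  by (rule interval_integral_sum)
     (cases "a \<le> b"; cases "b \<le> c"; cases "a \<le> c"; auto simp: min_def max_def intro: loc_integrable)

lemma J_Icc: "a \<le> b \<Longrightarrow> J a b f = (LINT t:{a..b}|lborel. f t)"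
  unfolding J_def by (rule interval_integral_Icc)

lemma J_HK: "loc f \<Longrightarrow> a \<le> b \<Longrightarrow> J a b f = integral {a..b} f \<and> f integrable_on {a..b}"
  unfolding J_def
  using interval_integral_eq_integral[of a b f] loc_set_integrable[of f a b]
        set_borel_integral_eq_integral(1)[of "{a..b}" f] by auto

lemma J_cong: "(\<And>t. min a b \<le> t \<Longrightarrow> t \<le> max a b \<Longrightarrow> f t = g t) \<Longrightarrow> J a b f = J a b g"
  unfolding J_def
  by (rule interval_integral_cong) (auto simp: einterval_iff min_def max_def split: if_splits)

lemma J_bound:
  assumes "loc f" "\<And>t. min a b \<le> t \<Longrightarrow> t \<le> max a b \<Longrightarrow> norm (f t) \<le> C"
  shows "norm (J a b f) \<le> C * \<bar>b - a\<bar>"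
proof -
  have *: "norm (J a b f) \<le> C * (b - a)" if ab: "a \<le> b" "\<And>t. a \<le> t \<Longrightarrow> t \<le> b \<Longrightarrow> norm (f t) \<le> C" for a b
  proof (cases "a = b")
    case False
    then have "a < b" using ab by auto
    then have C0: "0 \<le> C" using ab(2)[of a] by (meson norm_ge_zero order_trans order_less_imp_le order_refl)
    from J_HK[OF assms(1) ab(1)] have "(f has_integral J a b f) {a..b}" by auto
    from has_integral_bound[OF C0, of f "J a b f" a b] this ab show ?thesis by auto
  qed simp
  show ?thesis
  proof (cases "a \<le> b")
    case True then show ?thesis using *[of a b] assms(2) by auto
  next
    case False then show ?thesis using *[of b a] assms(2) J_rev[of a b f] by auto
  qed
qed

lemma J_FTC:
  assumes "\<And>t. (F has_vector_derivative f t) (at t)" "continuous_on UNIV f"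
  shows "J a b f = F b - F a"
  unfolding J_def
  by (rule interval_integral_FTC_finite)
     (auto intro: continuous_on_subset[OF assms(2)] has_vector_derivative_at_within assms(1))

lemma J_shift: "J (a + c) (b + c) f = J a b (\<lambda>t. f (t + c))"
proof -
  have *: "J (a + c) (b + c) f = J a b (\<lambda>t. f (t + c))" if "a \<le> b" for a b
  proof -
    have "J (a + c) (b + c) f = (LBINT t. indicator {a+c..b+c} t *\<^sub>R f t)"
      using that by (simp add: J_Icc set_lebesgue_integral_def)
    also have "\<dots> = (LBINT t. indicator {a+c..b+c} (c + 1 * t) *\<^sub>R f (c + 1 * t))"
      using lborel_integral_real_affine[of 1 "\<lambda>t. indicator {a+c..b+c} t *\<^sub>R f t" c] by simp
    also have "\<dots> = (LBINT t. indicator {a..b} t *\<^sub>R f (t + c))"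
      by (intro Bochner_Integration.integral_cong) (auto simp: indicator_def add.commute)
    finally show ?thesis using that by (simp add: J_Icc set_lebesgue_integral_def)
  qed
  show ?thesis
  proof (cases "a \<le> b")
    case False
    then have "J (b + c) (a + c) f = J b a (\<lambda>t. f (t + c))" by (intro *) auto
    then show ?thesis by (metis J_rev)
  qed (rule *)
qed

lemma J_reflect: "J (- a) (- b) f = - J a b (\<lambda>t. f (- t))"
proof -
  have *: "J (- b) (- a) f = J a b (\<lambda>t. f (- t))" if "a \<le> b" for a b
  proof -
    have "J (- b) (- a) f = (LBINT t : {-b..-a}. f t)" using that by (simp add: J_Icc)
    also have "\<dots> = (LBINT t : {t. - t \<in> {-b..-a}}. f (- t))" by (rule set_integral_reflect)
    also have "{t. - t \<in> {-b..-a}} = {a..b}" by auto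
    finally show ?thesis using that by (simp add: J_Icc)
  qed
  show ?thesis
  proof (cases "a \<le> b")
    case True
    then show ?thesis using *[of a b] J_rev[of "- a" "- b" f] by simp
  next
    case False
    then show ?thesis using *[of b a] J_rev[of a b] by simp
  qed
qed

lemma lip_cont:
  fixes g :: "real \<Rightarrow> complex"
  assumes "\<And>x. \<exists>C. \<forall>y. \<bar>y - x\<bar> \<le> 1 \<longrightarrow> norm (g y - g x) \<le> C * \<bar>y - x\<bar>"
  shows "continuous_on UNIV g"
  unfolding continuous_on_def
proof
  fix x
  obtain C where C: "\<forall>y. \<bar>y - x\<bar> \<le> 1 \<longrightarrow> norm (g y - g x) \<le> C * \<bar>y - x\<bar>" using assms by blast
  have "((\<lambda>y. g y - g x) \<longlongrightarrow> 0) (at x within UNIV)"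
  proof (rule Lim_null_comparison)
    show "\<forall>\<^sub>F y in at x within UNIV. norm (g y - g x) \<le> C * \<bar>y - x\<bar>"
      using C by (auto simp: eventually_at dist_real_def intro!: exI[of _ 1])
    have "((\<lambda>y. C * \<bar>y - x\<bar>) \<longlongrightarrow> C * \<bar>x - x\<bar>) (at x within UNIV)"
      by (intro tendsto_intros)
    then show "((\<lambda>y. C * \<bar>y - x\<bar>) \<longlongrightarrow> 0) (at x within UNIV)" by simp
  qed
  then show "(g \<longlongrightarrow> g x) (at x within UNIV)" by (simp add: LIM_zero_iff)
qed

lemma J_cont: "loc f \<Longrightarrow> continuous_on UNIV (\<lambda>x. J a x f)"
proof (rule lip_cont)
  fix x assume l: "loc f"
  then obtain C where C: "\<forall>t\<in>{x-1..x+1}. norm (f t) \<le> C" unfolding loc_def by metis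
  show "\<exists>C. \<forall>y. \<bar>y - x\<bar> \<le> 1 \<longrightarrow> norm (J a y f - J a x f) \<le> C * \<bar>y - x\<bar>"
  proof (intro exI allI impI)
    fix y assume y: "\<bar>y - x\<bar> \<le> 1"
    have "J a y f - J a x f = J x y f" using J_split[OF l, of a x y] by (simp add: algebra_simps)
    also have "norm \<dots> \<le> C * \<bar>y - x\<bar>"
      by (rule J_bound[OF l]) (use C y in \<open>auto simp: min_def max_def split: if_splits\<close>)
    finally show "norm (J a y f - J a x f) \<le> C * \<bar>y - x\<bar>" .
  qed
qed

definition Tl :: "real \<Rightarrow> (real \<Rightarrow> complex) \<Rightarrow> complex" where
  "Tl x f = (LINT t:{x..}|lborel. f t)"

lemma exp_tail:
  fixes c x :: real
  assumes c: "c > 0"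
  shows "set_integrable lborel {x..} (\<lambda>t. exp (-c*t))"
    and "(LINT t:{x..}|lborel. exp (-c*t)) = exp (-c*x)/c"
proof -
  have h: "((\<lambda>t. exp (-c*t)) has_integral exp (-c*x)/c) {x..}"
    by (rule has_integral_exp_minus_to_infinity[OF c])
  have ai: "(\<lambda>t. exp (-c*t)) absolutely_integrable_on {x..}"
    using h by (intro nonnegative_absolutely_integrable_1) (auto simp: has_integral_integrable)
  then show si: "set_integrable lborel {x..} (\<lambda>t. exp (-c*t))"
    unfolding set_integrable_def by (subst (asm) integrable_completion) auto
  show "(LINT t:{x..}|lborel. exp (-c*t)) = exp (-c*x)/c"
    using set_borel_integral_eq_integral(2)[OF si] integral_unique[OF h] by simp
qed

lemma tail_int:
  fixes f :: "real \<Rightarrow> complex"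
  assumes f[measurable]: "f \<in> borel_measurable borel" and c: "c > 0"
    and b: "\<And>t. t \<ge> x \<Longrightarrow> norm (f t) \<le> C * exp (-c*t)"
  shows "set_integrable lborel {x..} f" "norm (Tl x f) \<le> C * exp (-c*x) / c"
proof -
  have si: "set_integrable lborel {x..} (\<lambda>t. C * exp (-c*t))"
    using exp_tail(1)[OF c, of x] by simp
  show fi: "set_integrable lborel {x..} f"
  proof (rule set_integrable_bound[OF si])
    show "set_borel_measurable lborel {x..} f" unfolding set_borel_measurable_def by measurable
    show "AE t in lborel. t \<in> {x..} \<longrightarrow> norm (f t) \<le> norm (C * exp (- c * t))"
      using b by (auto intro!: AE_I2 intro: order_trans[OF _ abs_ge_self])
  qed
  have "norm (Tl x f) \<le> (LINT t:{x..}|lborel. norm (f t))"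
    unfolding Tl_def by (rule set_integral_norm_bound[OF fi])
  also have "\<dots> \<le> (LINT t:{x..}|lborel. C * exp (-c*t))"
    by (rule set_integral_mono[OF set_integrable_norm[OF fi] si]) (use b in auto)
  also have "\<dots> = C * exp (-c*x) / c" using exp_tail(2)[OF c, of x] by simp
  finally show "norm (Tl x f) \<le> C * exp (-c*x) / c" .
qed

lemma Tl_split:
  fixes f :: "real \<Rightarrow> complex"
  assumes l: "loc f" and si: "set_integrable lborel {min x y..} f"
  shows "Tl x f = J x y f + Tl y f"
proof -
  have fm[measurable]: "f \<in> borel_measurable borel" using l unfolding loc_def by auto
  have *: "Tl a f = J a b f + Tl b f" if ab: "a \<le> b" "set_integrable lborel {a..} f" for a b
  proof -
    have "{a..} = {a..<b} \<union> {b..}" using ab by auto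
    then have "Tl a f = (LINT t:{a..<b} \<union> {b..}|lborel. f t)" unfolding Tl_def by simp
    also have "\<dots> = (LINT t:{a..<b}|lborel. f t) + Tl b f"
      unfolding Tl_def
      by (rule set_integral_Un) (auto intro!: set_integrable_subset[OF ab(2)] simp: ab(1))
    also have "(LINT t:{a..<b}|lborel. f t) = (LINT t:{a<..<b}|lborel. f t)"
    proof (rule set_integral_cong_set)
      show "set_borel_measurable lborel {a..<b} f" "set_borel_measurable lborel {a<..<b} f"
        unfolding set_borel_measurable_def by measurable
      show "AE x in lborel. (x \<in> {a<..<b}) = (x \<in> {a..<b})"
        by (rule eventually_mono[OF AE_lborel_singleton[of a]]) auto
    qed
    also have "(LINT t:{a<..<b}|lborel. f t) = J a b f"
      using ab by (simp add: J_def interval_lebesgue_integral_le_eq)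
    finally show ?thesis .
  qed
  show ?thesis
  proof (cases "x \<le> y")
    case True then show ?thesis using *[of x y] si by auto
  next
    case False
    then have "Tl y f = J y x f + Tl x f" using *[of y x] si by auto
    then show ?thesis using J_rev[of x y f] by simp
  qed
qed

lemma Tl_add: "set_integrable lborel {x..} f \<Longrightarrow> set_integrable lborel {x..} g \<Longrightarrow>
   Tl x (\<lambda>t. f t + g t) = Tl x f + Tl x g"
  unfolding Tl_def by (rule set_integral_add)

lemma Tl_cmult: "Tl x (\<lambda>t. c * f t) = c * Tl x f"
  unfolding Tl_def by simp

lemma Tl_shift: "Tl (x + c) f = Tl x (\<lambda>t. f (t + c))"
proof -
  have "Tl (x + c) f = (LBINT t. indicator {x+c..} t *\<^sub>R f t)"
    by (simp add: Tl_def set_lebesgue_integral_def)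
  also have "\<dots> = (LBINT t. indicator {x+c..} (c + 1 * t) *\<^sub>R f (c + 1 * t))"
    using lborel_integral_real_affine[of 1 "\<lambda>t. indicator {x+c..} t *\<^sub>R f t" c] by simp
  also have "\<dots> = (LBINT t. indicator {x..} t *\<^sub>R f (t + c))"
    by (intro Bochner_Integration.integral_cong) (auto simp: indicator_def add.commute)
  finally show ?thesis by (simp add: Tl_def set_lebesgue_integral_def)
qed

lemma J_exp_bound:
  assumes l: "loc f" and b: "\<And>t. norm (f t) \<le> B * exp \<bar>t\<bar>"
  shows "norm (J 0 x f) \<le> B * exp \<bar>x\<bar>"
proof -
  have "norm (f 0) \<le> B" using b[of 0] by simp
  then have B0: "0 \<le> B" by (rule order_trans[OF norm_ge_zero])
  show ?thesis
  proof (cases "0 \<le> x")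
    case True
    have JI: "J 0 x f = integral {0..x} f" "f integrable_on {0..x}" using J_HK[OF l True] by auto
    have hi: "((\<lambda>t. B * exp t) has_integral (B * exp x - B * exp 0)) {0..x}"
      using True by (intro fundamental_theorem_of_calculus)
        (auto intro!: derivative_eq_intros simp flip: has_real_derivative_iff_has_vector_derivative)
    have b': "norm (f t) \<le> B * exp t" if "t \<in> {0..x}" for t
    proof -
      have "\<bar>t\<bar> = t" using that by simp
      then show ?thesis using b[of t] by simp
    qed
    have "norm (integral {0..x} f) \<le> integral {0..x} (\<lambda>t. B * exp t)"
      by (rule integral_norm_bound_integral[OF JI(2)]) (use hi b' in \<open>auto simp: has_integral_integrable\<close>)
    also have "\<dots> = B * exp x - B" using integral_unique[OF hi] by simp
    finally show ?thesis using JI True B0 by simp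
  next
    case False
    then have x0: "x \<le> 0" by simp
    have JI: "J x 0 f = integral {x..0} f" "f integrable_on {x..0}" using J_HK[OF l x0] by auto
    have hi: "((\<lambda>t. B * exp (-t)) has_integral (B * - exp (-0) - B * - exp (-x))) {x..0}"
      using x0 by (intro fundamental_theorem_of_calculus)
        (auto intro!: derivative_eq_intros simp flip: has_real_derivative_iff_has_vector_derivative)
    have b': "norm (f t) \<le> B * exp (-t)" if "t \<in> {x..0}" for t
    proof -
      have "\<bar>t\<bar> = -t" using that by simp
      then show ?thesis using b[of t] by simp
    qed
    have "norm (integral {x..0} f) \<le> integral {x..0} (\<lambda>t. B * exp (-t))"
      by (rule integral_norm_bound_integral[OF JI(2)]) (use hi b' in \<open>auto simp: has_integral_integrable\<close>)
    also have "\<dots> = B * exp (-x) - B" using integral_unique[OF hi] by simp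
    finally show ?thesis using JI x0 B0 J_rev[of 0 x f] by simp
  qed
qed

lemma quad_const:
  fixes D :: "real \<Rightarrow> complex"
  assumes q: "\<And>x. \<exists>C. \<forall>y. \<bar>y - x\<bar> \<le> 1 \<longrightarrow> norm (D y - D x) \<le> C * (y - x)\<^sup>2"
  shows "D x = D 0"
proof -
  have d: "(D has_derivative (\<lambda>h. 0)) (at x within UNIV)" for x
  proof -
    obtain C where C: "\<forall>y. \<bar>y - x\<bar> \<le> 1 \<longrightarrow> norm (D y - D x) \<le> C * (y - x)\<^sup>2" using q by blast
    have "((\<lambda>y. norm (D y - D x - 0) / norm (y - x)) \<longlongrightarrow> 0) (at x within UNIV)"
    proof (rule Lim_null_comparison)
      show "\<forall>\<^sub>F y in at x within UNIV. norm (norm (D y - D x - 0) / norm (y - x)) \<le> \<bar>C\<bar> * \<bar>y - x\<bar>"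
        unfolding eventually_at
      proof (intro exI[of _ 1] conjI ballI impI)
        fix y assume "y \<noteq> x \<and> dist y x < 1"
        then have y: "\<bar>y - x\<bar> \<le> 1" "y \<noteq> x" by (auto simp: dist_real_def)
        have "norm (D y - D x) \<le> C * (y - x)\<^sup>2" using C y by auto
        also have "\<dots> \<le> \<bar>C\<bar> * \<bar>y - x\<bar> * \<bar>y - x\<bar>" by (simp add: power2_eq_square abs_mult mult.assoc mult_right_mono)
        finally show "norm (norm (D y - D x - 0) / norm (y - x)) \<le> \<bar>C\<bar> * \<bar>y - x\<bar>"
          using y by (simp add: divide_le_eq)
      qed simp
      have "((\<lambda>y. \<bar>C\<bar> * \<bar>y - x\<bar>) \<longlongrightarrow> \<bar>C\<bar> * \<bar>x - x\<bar>) (at x within UNIV)"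
        by (intro tendsto_intros)
      then show "((\<lambda>y. \<bar>C\<bar> * \<bar>y - x\<bar>) \<longlongrightarrow> 0) (at x within UNIV)" by simp
    qed
    then show ?thesis unfolding has_derivative_iff_norm by simp
  qed
  obtain c where "\<forall>x\<in>UNIV. D x = c"
    using has_derivative_zero_constant[of UNIV D] d by auto
  then show ?thesis by auto
qed

lemma loc_bound_at: "loc f \<Longrightarrow> \<exists>C. \<forall>t\<in>{a..b}. norm (f t) \<le> C"
  unfolding loc_def by auto

lemma IBP:
  fixes \<phi> \<phi>' h :: "real \<Rightarrow> complex"
  assumes d: "\<And>t. (\<phi> has_vector_derivative \<phi>' t) (at t)" and c: "continuous_on UNIV \<phi>'" and l: "loc h"
  shows "\<phi> x * J 0 x h = J 0 x (\<lambda>t. \<phi>' t * J 0 t h + \<phi> t * h t)"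
proof -
  define H where "H t = J 0 t h" for t
  define g where "g t = \<phi>' t * H t + \<phi> t * h t" for t
  have cphi: "continuous_on UNIV \<phi>"
    using d by (meson continuous_at_imp_continuous_on has_vector_derivative_continuous)
  have lH: "loc H" unfolding H_def by (rule loc_cont[OF J_cont[OF l]])
  have lp': "loc \<phi>'" by (rule loc_cont[OF c])
  have lp: "loc \<phi>" by (rule loc_cont[OF cphi])
  have lg: "loc g" unfolding g_def by (intro loc_add loc_mult lH lp' lp l)
  define D where "D x = \<phi> x * H x - J 0 x g" for x
  have "D x = D 0"
  proof (rule quad_const)
    fix x
    obtain P where P: "\<forall>t\<in>{x-2..x+2}. norm (\<phi>' t) \<le> P" using loc_bound_at[OF lp'] by blast
    obtain Hb where Hb: "\<forall>t\<in>{x-2..x+2}. norm (h t) \<le> Hb" using loc_bound_at[OF l] by blast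
    show "\<exists>C. \<forall>y. \<bar>y - x\<bar> \<le> 1 \<longrightarrow> norm (D y - D x) \<le> C * (y - x)\<^sup>2"
    proof (intro exI[of _ "2 * P * Hb"] allI impI)
      fix y assume y: "\<bar>y - x\<bar> \<le> 1"
      have phidiff: "\<phi> b - \<phi> a = J a b \<phi>'" for a b using J_FTC[OF d c, of a b] by simp
      have Hdiff: "H b - H a = J a b h" for a b using J_split[OF l, of 0 a b] unfolding H_def by (simp add: algebra_simps)
      have "D y - D x = (\<phi> y - \<phi> x) * H x + \<phi> y * (H y - H x) - (J 0 y g - J 0 x g)"
        unfolding D_def by (simp add: algebra_simps)
      also have "J 0 y g - J 0 x g = J x y g" using J_split[OF lg, of 0 x y] by (simp add: algebra_simps)
      also have "(\<phi> y - \<phi> x) * H x = J x y (\<lambda>t. \<phi>' t * H x)" by (simp add: phidiff J_multc)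
      also have "\<phi> y * (H y - H x) = J x y (\<lambda>t. \<phi> y * h t)" by (simp add: Hdiff J_cmult)
      also have "J x y (\<lambda>t. \<phi>' t * H x) + J x y (\<lambda>t. \<phi> y * h t) - J x y g
          = J x y (\<lambda>t. \<phi>' t * (H x - H t)) + J x y (\<lambda>t. (\<phi> y - \<phi> t) * h t)"
      proof -
        have "J x y (\<lambda>t. \<phi>' t * H x) + J x y (\<lambda>t. \<phi> y * h t) - J x y g
             = J x y (\<lambda>t. \<phi>' t * H x + \<phi> y * h t - g t)"
          by (simp add: J_add J_diff loc_add loc_mult lp' l lg loc_cmult loc_cont[OF continuous_on_const] mult.commute)
        also have "\<dots> = J x y (\<lambda>t. \<phi>' t * (H x - H t) + (\<phi> y - \<phi> t) * h t)"
          by (rule J_cong) (simp add: g_def algebra_simps)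
        also have "\<dots> = J x y (\<lambda>t. \<phi>' t * (H x - H t)) + J x y (\<lambda>t. (\<phi> y - \<phi> t) * h t)"
          by (intro J_add loc_mult loc_diff lp' lH lp l loc_cont[OF continuous_on_const])
        finally show ?thesis .
      qed
      finally have eq: "D y - D x = J x y (\<lambda>t. \<phi>' t * (H x - H t)) + J x y (\<lambda>t. (\<phi> y - \<phi> t) * h t)" .
      have b1: "norm (J x y (\<lambda>t. \<phi>' t * (H x - H t))) \<le> (P * (Hb * \<bar>y - x\<bar>)) * \<bar>y - x\<bar>"
      proof (rule J_bound)
        show "loc (\<lambda>t. \<phi>' t * (H x - H t))" by (intro loc_mult loc_diff lp' lH loc_cont[OF continuous_on_const])
        fix t assume t: "min x y \<le> t" "t \<le> max x y"
        have "norm (H x - H t) = norm (J t x h)" by (simp add: Hdiff)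
        also have "\<dots> \<le> Hb * \<bar>x - t\<bar>"
          by (rule J_bound[OF l]) (use Hb t y in \<open>auto simp: min_def max_def split: if_splits\<close>)
        also have "\<dots> \<le> Hb * \<bar>y - x\<bar>"
        proof -
          have "0 \<le> Hb" using Hb[rule_format, of x] by (auto intro: order_trans[OF norm_ge_zero])
          then show ?thesis using t by (intro mult_left_mono) (auto simp: min_def max_def split: if_splits)
        qed
        finally have 1: "norm (H x - H t) \<le> Hb * \<bar>y - x\<bar>" .
        have 2: "norm (\<phi>' t) \<le> P" using P t y by (auto simp: min_def max_def split: if_splits)
        show "norm (\<phi>' t * (H x - H t)) \<le> P * (Hb * \<bar>y - x\<bar>)"
          unfolding norm_mult by (rule mult_mono[OF 2 1]) (auto intro: order_trans[OF norm_ge_zero 2])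
      qed
      have b2: "norm (J x y (\<lambda>t. (\<phi> y - \<phi> t) * h t)) \<le> ((P * \<bar>y - x\<bar>) * Hb) * \<bar>y - x\<bar>"
      proof (rule J_bound)
        show "loc (\<lambda>t. (\<phi> y - \<phi> t) * h t)" by (intro loc_mult loc_diff lp l loc_cont[OF continuous_on_const])
        fix t assume t: "min x y \<le> t" "t \<le> max x y"
        have "norm (\<phi> y - \<phi> t) = norm (J t y \<phi>')" by (simp add: phidiff)
        also have "\<dots> \<le> P * \<bar>y - t\<bar>"
          by (rule J_bound[OF lp']) (use P t y in \<open>auto simp: min_def max_def split: if_splits\<close>)
        also have "\<dots> \<le> P * \<bar>y - x\<bar>"
        proof -
          have "0 \<le> P" using P[rule_format, of x] by (auto intro: order_trans[OF norm_ge_zero])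
          then show ?thesis using t by (intro mult_left_mono) (auto simp: min_def max_def split: if_splits)
        qed
        finally have 1: "norm (\<phi> y - \<phi> t) \<le> P * \<bar>y - x\<bar>" .
        have 2: "norm (h t) \<le> Hb" using Hb t y by (auto simp: min_def max_def split: if_splits)
        show "norm ((\<phi> y - \<phi> t) * h t) \<le> (P * \<bar>y - x\<bar>) * Hb"
          unfolding norm_mult by (rule mult_mono[OF 1 2]) (auto intro: order_trans[OF norm_ge_zero 1])
      qed
      have "norm (D y - D x) \<le> (P * (Hb * \<bar>y - x\<bar>)) * \<bar>y - x\<bar> + ((P * \<bar>y - x\<bar>) * Hb) * \<bar>y - x\<bar>"
        unfolding eq by (rule order_trans[OF norm_triangle_ineq add_mono[OF b1 b2]])
      also have "\<dots> = 2 * P * Hb * (y - x)\<^sup>2" by (simp add: power2_eq_square algebra_simps abs_mult_self_eq)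
      finally show "norm (D y - D x) \<le> 2 * P * Hb * (y - x)\<^sup>2" .
    qed
  qed
  then show ?thesis unfolding D_def H_def g_def by simp
qed

definition pot :: "(real \<Rightarrow> real) \<Rightarrow> real \<Rightarrow> bool" where
  "pot u M \<longleftrightarrow> u \<in> borel_measurable borel \<and> (\<forall>t. \<bar>u t\<bar> \<le> M)"

definition solp :: "(real \<Rightarrow> real) \<Rightarrow> complex \<Rightarrow> (real \<Rightarrow> complex) \<Rightarrow> (real \<Rightarrow> complex) \<Rightarrow> bool" where
  "solp u l f f' \<longleftrightarrow> continuous_on UNIV f \<and> continuous_on UNIV f' \<and>
     (\<forall>x. f x = f 0 + J 0 x f') \<and>
     (\<forall>x. f' x = f' 0 + J 0 x (\<lambda>t. (complex_of_real (u t) - l) * f t))"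

lemma loc_pot: "pot u M \<Longrightarrow> loc (\<lambda>t. complex_of_real (u t))"
  unfolding pot_def by (intro loc_bdd[of _ M]) auto

lemma loc_potc: "pot u M \<Longrightarrow> continuous_on UNIV f \<Longrightarrow> loc (\<lambda>t. (complex_of_real (u t) - l) * f t)"
  by (intro loc_mult loc_diff loc_pot loc_cont continuous_on_const) auto

lemma J_bound2:
  assumes "loc h" "\<forall>t\<in>{a..b}. norm (h t) \<le> C" "a \<le> min y z" "max y z \<le> b"
  shows "norm (J y z h) \<le> C * \<bar>z - y\<bar>"
proof (rule J_bound[OF assms(1)])
  fix t assume t: "min y z \<le> t" "t \<le> max y z"
  have "a \<le> t" "t \<le> b" using order_trans[OF assms(3) t(1)] order_trans[OF t(2) assms(4)] by auto
  then show "norm (h t) \<le> C" using assms(2) by auto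
qed

lemma solp_incr:
  assumes "pot u M" "solp u l f f'"
  shows "f s - f t = J t s f'" "f' s - f' t = J t s (\<lambda>t. (complex_of_real (u t) - l) * f t)"
proof -
  have c: "continuous_on UNIV f" "continuous_on UNIV f'" using assms(2) unfolding solp_def by blast+
  have e: "f x = f 0 + J 0 x f'" "f' x = f' 0 + J 0 x (\<lambda>t. (complex_of_real (u t) - l) * f t)" for x
    using assms(2) unfolding solp_def by blast+
  have sp1: "J 0 s f' = J 0 t f' + J t s f'" using J_split[OF loc_cont[OF c(2)], of 0 t s] by simp
  have "f s - f t = (f 0 + J 0 s f') - (f 0 + J 0 t f')"
    by (rule arg_cong2[where f="(-)", OF e(1)[of s] e(1)[of t]])
  then show "f s - f t = J t s f'" by (simp add: sp1)
  have sp2: "J 0 s (\<lambda>t. (complex_of_real (u t) - l) * f t) = J 0 t (\<lambda>t. (complex_of_real (u t) - l) * f t)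
     + J t s (\<lambda>t. (complex_of_real (u t) - l) * f t)"
    using J_split[OF loc_potc[OF assms(1) c(1), of l], of 0 t s] by simp
  have "f' s - f' t = (f' 0 + J 0 s (\<lambda>t. (complex_of_real (u t) - l) * f t)) - (f' 0 + J 0 t (\<lambda>t. (complex_of_real (u t) - l) * f t))"
    by (rule arg_cong2[where f="(-)", OF e(2)[of s] e(2)[of t]])
  then show "f' s - f' t = J t s (\<lambda>t. (complex_of_real (u t) - l) * f t)" by (simp add: sp2)
qed

lemma solp_lip:
  assumes p: "pot u M" and s: "solp u l f f'"
  shows "\<exists>L. \<forall>s\<in>{a..b}. \<forall>t\<in>{a..b}. norm (f s - f t) \<le> L * \<bar>s - t\<bar> \<and> norm (f' s - f' t) \<le> L * \<bar>s - t\<bar>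
      \<and> norm (f s) \<le> L \<and> norm (f' s) \<le> L"
proof -
  have c: "continuous_on UNIV f" "continuous_on UNIV f'" using s unfolding solp_def by blast+
  obtain C1 where C1: "\<forall>t\<in>{a..b}. norm (f' t) \<le> C1" using loc_bound_at[OF loc_cont[OF c(2)]] by blast
  obtain C2 where C2: "\<forall>t\<in>{a..b}. norm ((complex_of_real (u t) - l) * f t) \<le> C2"
    using loc_bound_at[OF loc_potc[OF p c(1)]] by blast
  obtain C3 where C3: "\<forall>t\<in>{a..b}. norm (f t) \<le> C3" using loc_bound_at[OF loc_cont[OF c(1)]] by blast
  define L where "L = max C1 (max C2 C3)"
  show ?thesis
  proof (intro exI[of _ L] ballI conjI)
    fix s t assume st: "s \<in> {a..b}" "t \<in> {a..b}"
    have "norm (f s - f t) = norm (J t s f')" using solp_incr[OF p s] by simp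
    also have "\<dots> \<le> C1 * \<bar>s - t\<bar>" by (rule J_bound2[OF loc_cont[OF c(2)] C1]) (use st in auto)
    also have "\<dots> \<le> L * \<bar>s - t\<bar>" unfolding L_def by (intro mult_right_mono) (auto simp: le_max_iff_disj)
    finally show "norm (f s - f t) \<le> L * \<bar>s - t\<bar>" .
    have "norm (f' s - f' t) = norm (J t s (\<lambda>t. (complex_of_real (u t) - l) * f t))" using solp_incr[OF p s] by simp
    also have "\<dots> \<le> C2 * \<bar>s - t\<bar>" by (rule J_bound2[OF loc_potc[OF p c(1)] C2]) (use st in auto)
    also have "\<dots> \<le> L * \<bar>s - t\<bar>" unfolding L_def by (intro mult_right_mono) (auto simp: le_max_iff_disj)
    finally show "norm (f' s - f' t) \<le> L * \<bar>s - t\<bar>" .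
    have "norm (f s) \<le> C3" using C3 st by blast
    then show "norm (f s) \<le> L" unfolding L_def by (simp add: le_max_iff_disj)
    have "norm (f' s) \<le> C1" using C1 st by blast
    then show "norm (f' s) \<le> L" unfolding L_def by (simp add: le_max_iff_disj)
  qed
qed

lemma prod_bound: "norm (a::complex) \<le> A \<Longrightarrow> norm b \<le> B \<Longrightarrow> norm (a * b) \<le> A * B"
  unfolding norm_mult by (rule mult_mono) (auto intro: order_trans[OF norm_ge_zero])

lemma scale_bound: "norm (z::complex) \<le> L * \<bar>p\<bar> \<Longrightarrow> \<bar>p\<bar> \<le> \<bar>q\<bar> \<Longrightarrow> 0 \<le> L \<Longrightarrow> norm z \<le> L * \<bar>q\<bar>"
  by (erule order_trans) (rule mult_left_mono)

lemma wronski: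
  assumes p: "pot u M" and sf: "solp u l f f'" and sg: "solp u l g g'"
  shows "f x * g' x - f' x * g x = f 0 * g' 0 - f' 0 * g 0"
proof (rule quad_const[where D = "\<lambda>x. f x * g' x - f' x * g x"])
  fix x
  have cf: "continuous_on UNIV f" "continuous_on UNIV f'" using sf unfolding solp_def by blast+
  have cg: "continuous_on UNIV g" "continuous_on UNIV g'" using sg unfolding solp_def by blast+
  obtain L1 where L1: "\<forall>s\<in>{x-1..x+1}. \<forall>t\<in>{x-1..x+1}. norm (f s - f t) \<le> L1 * \<bar>s - t\<bar> \<and> norm (f' s - f' t) \<le> L1 * \<bar>s - t\<bar>
      \<and> norm (f s) \<le> L1 \<and> norm (f' s) \<le> L1" using solp_lip[OF p sf] by blast
  obtain L2 where L2: "\<forall>s\<in>{x-1..x+1}. \<forall>t\<in>{x-1..x+1}. norm (g s - g t) \<le> L2 * \<bar>s - t\<bar> \<and> norm (g' s - g' t) \<le> L2 * \<bar>s - t\<bar>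
      \<and> norm (g s) \<le> L2 \<and> norm (g' s) \<le> L2" using solp_lip[OF p sg] by blast
  define L where "L = max L1 L2"
  have LL: "L1 \<le> L" "L2 \<le> L" unfolding L_def by auto
  have "x \<in> {x-1..x+1}" by simp
  then have "norm (f x) \<le> L1" using L1 by blast
  then have L0: "0 \<le> L" using LL(1) norm_ge_zero[of "f x"] by linarith
  have Lf: "norm (f s - f t) \<le> L * \<bar>s - t\<bar>" "norm (f' s - f' t) \<le> L * \<bar>s - t\<bar>" "norm (f s) \<le> L" "norm (f' s) \<le> L"
    if "s \<in> {x-1..x+1}" "t \<in> {x-1..x+1}" for s t
  proof -
    have h: "norm (f s - f t) \<le> L1 * \<bar>s - t\<bar>" "norm (f' s - f' t) \<le> L1 * \<bar>s - t\<bar>" "norm (f s) \<le> L1" "norm (f' s) \<le> L1"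
      using L1 that by blast+
    have m: "L1 * \<bar>s - t\<bar> \<le> L * \<bar>s - t\<bar>" by (rule mult_right_mono[OF LL(1)]) simp
    show "norm (f s - f t) \<le> L * \<bar>s - t\<bar>" "norm (f' s - f' t) \<le> L * \<bar>s - t\<bar>" "norm (f s) \<le> L" "norm (f' s) \<le> L"
      using h m LL(1) by linarith+
  qed
  have Lg: "norm (g s - g t) \<le> L * \<bar>s - t\<bar>" "norm (g' s - g' t) \<le> L * \<bar>s - t\<bar>" "norm (g s) \<le> L" "norm (g' s) \<le> L"
    if "s \<in> {x-1..x+1}" "t \<in> {x-1..x+1}" for s t
  proof -
    have h: "norm (g s - g t) \<le> L2 * \<bar>s - t\<bar>" "norm (g' s - g' t) \<le> L2 * \<bar>s - t\<bar>" "norm (g s) \<le> L2" "norm (g' s) \<le> L2"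
      using L2 that by blast+
    have m: "L2 * \<bar>s - t\<bar> \<le> L * \<bar>s - t\<bar>" by (rule mult_right_mono[OF LL(2)]) simp
    show "norm (g s - g t) \<le> L * \<bar>s - t\<bar>" "norm (g' s - g' t) \<le> L * \<bar>s - t\<bar>" "norm (g s) \<le> L" "norm (g' s) \<le> L"
      using h m LL(2) by linarith+
  qed
  define Q where "Q = \<bar>M\<bar> + norm l"
  have Q: "norm (complex_of_real (u t) - l) \<le> Q" for t
  proof -
    have "norm (complex_of_real (u t) - l) \<le> norm (complex_of_real (u t)) + norm l" by (rule norm_triangle_ineq4)
    also have "norm (complex_of_real (u t)) \<le> \<bar>M\<bar>" using p unfolding pot_def by (auto intro: order_trans[OF _ abs_ge_self])
    finally show ?thesis unfolding Q_def by simp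
  qed
  define q where "q t = complex_of_real (u t) - l" for t
  have lq: "loc q" unfolding q_def by (intro loc_diff loc_pot[OF p] loc_cont continuous_on_const)
  show "\<exists>C. \<forall>y. \<bar>y - x\<bar> \<le> 1 \<longrightarrow> norm (f y * g' y - f' y * g y - (f x * g' x - f' x * g x)) \<le> C * (y - x)\<^sup>2"
  proof (intro exI[of _ "2 * L * L + Q * 2 * L * L"] allI impI)
    fix y assume y: "\<bar>y - x\<bar> \<le> 1"
    define I where "I t = f' t * g' y + f x * (q t * g t) - q t * f t * g y - f' x * g' t" for t
    have "f y * g' y - f' y * g y - (f x * g' x - f' x * g x)
        = (f y - f x) * g' y + f x * (g' y - g' x) - (f' y - f' x) * g y - f' x * (g y - g x)"
      by (simp add: algebra_simps)
    also have "\<dots> = J x y f' * g' y + f x * J x y (\<lambda>t. q t * g t) - J x y (\<lambda>t. q t * f t) * g y - f' x * J x y g'"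
      using solp_incr[OF p sf, of y x] solp_incr[OF p sg, of y x] unfolding q_def by simp
    also have "\<dots> = J x y I"
    proof -
      have l1: "loc f'" "loc g'" "loc f" "loc g" using cf cg by (auto intro: loc_cont)
      have "J x y I = J x y (\<lambda>t. f' t * g' y) + J x y (\<lambda>t. f x * (q t * g t)) - J x y (\<lambda>t. q t * f t * g y) - J x y (\<lambda>t. f' x * g' t)"
        unfolding I_def
        by (simp add: J_add J_diff loc_add loc_diff loc_mult loc_cmult l1 lq loc_cont[OF continuous_on_const])
      then show ?thesis by (simp add: J_cmult J_multc)
    qed
    finally have eq: "f y * g' y - f' y * g y - (f x * g' x - f' x * g x) = J x y I" .
    have Ib: "norm (I t) \<le> (2 * L * L + Q * 2 * L * L) * \<bar>y - x\<bar>" if t: "min x y \<le> t" "t \<le> max x y" for t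
    proof -
      have tx: "t \<in> {x-1..x+1}" "x \<in> {x-1..x+1}" "y \<in> {x-1..x+1}" using t y by (auto simp: min_def max_def split: if_splits)
      have d1: "\<bar>y - t\<bar> \<le> \<bar>y - x\<bar>" "\<bar>t - x\<bar> \<le> \<bar>y - x\<bar>" "\<bar>t - y\<bar> \<le> \<bar>y - x\<bar>" "\<bar>x - t\<bar> \<le> \<bar>y - x\<bar>"
        using t by (auto simp: min_def max_def split: if_splits)
      have "I t = f' t * (g' y - g' t) + (f' t - f' x) * g' t + q t * (f x * (g t - g y) + (f x - f t) * g y)"
        unfolding I_def by (simp add: algebra_simps)
      also have "norm \<dots> \<le> L * (L * \<bar>y - x\<bar>) + (L * \<bar>y - x\<bar>) * L + Q * (L * (L * \<bar>y - x\<bar>) + (L * \<bar>y - x\<bar>) * L)"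
      proof -
        have a1: "norm (f' t * (g' y - g' t)) \<le> L * (L * \<bar>y - x\<bar>)"
          by (rule prod_bound[OF Lf(4)[OF tx(1) tx(1)] scale_bound[OF Lg(2)[OF tx(3) tx(1)] d1(1) L0]])
        have a2: "norm ((f' t - f' x) * g' t) \<le> (L * \<bar>y - x\<bar>) * L"
          by (rule prod_bound[OF scale_bound[OF Lf(2)[OF tx(1) tx(2)] d1(2) L0] Lg(4)[OF tx(1) tx(1)]])
        have a3: "norm (f x * (g t - g y)) \<le> L * (L * \<bar>y - x\<bar>)"
          by (rule prod_bound[OF Lf(3)[OF tx(2) tx(2)] scale_bound[OF Lg(1)[OF tx(1) tx(3)] d1(3) L0]])
        have a4: "norm ((f x - f t) * g y) \<le> (L * \<bar>y - x\<bar>) * L"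
          by (rule prod_bound[OF scale_bound[OF Lf(1)[OF tx(2) tx(1)] d1(4) L0] Lg(3)[OF tx(3) tx(3)]])
        have a5: "norm (q t * (f x * (g t - g y) + (f x - f t) * g y)) \<le> Q * (L * (L * \<bar>y - x\<bar>) + (L * \<bar>y - x\<bar>) * L)"
          by (rule prod_bound[OF Q[of t, folded q_def] order_trans[OF norm_triangle_ineq add_mono[OF a3 a4]]])
        show ?thesis
          by (rule order_trans[OF norm_triangle_ineq add_mono[OF order_trans[OF norm_triangle_ineq add_mono[OF a1 a2]] a5]])
      qed
      also have "\<dots> = (2 * L * L + Q * 2 * L * L) * \<bar>y - x\<bar>" by (simp add: algebra_simps)
      finally show ?thesis .
    qed
    have lI: "loc I" unfolding I_def
      using cf cg by (intro loc_add loc_diff loc_mult lq loc_cont continuous_on_const) auto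
    have "norm (J x y I) \<le> ((2 * L * L + Q * 2 * L * L) * \<bar>y - x\<bar>) * \<bar>y - x\<bar>"
      by (rule J_bound[OF lI]) (use Ib in auto)
    also have "\<dots> = (2 * L * L + Q * 2 * L * L) * (y - x)\<^sup>2" by (simp add: power2_eq_square)
    finally show "norm (f y * g' y - f' y * g y - (f x * g' x - f' x * g x)) \<le> (2 * L * L + Q * 2 * L * L) * (y - x)\<^sup>2"
      using eq by simp
  qed
qed

lemma represent:
  assumes p: "pot u M"
    and s1: "solp u l y1 y1'" "y1 0 = 1" "y1' 0 = 0"
    and s2: "solp u l y2 y2'" "y2 0 = 0" "y2' 0 = 1"
    and sF: "solp u l F F'"
  shows "F x = F 0 * y1 x + F' 0 * y2 x" "F' x = F 0 * y1' x + F' 0 * y2' x"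
proof -
  have W: "y1 x * y2' x - y1' x * y2 x = 1" using wronski[OF p s1(1) s2(1), of x] s1 s2 by simp
  have W2: "F x * y2' x - F' x * y2 x = F 0" using wronski[OF p sF s2(1), of x] s2 by simp
  have W1: "F x * y1' x - F' x * y1 x = - F' 0" using wronski[OF p sF s1(1), of x] s1 by simp
  have "F x = F x * (y1 x * y2' x - y1' x * y2 x)" using W by simp
  also have "\<dots> = y1 x * (F x * y2' x - F' x * y2 x) - y2 x * (F x * y1' x - F' x * y1 x)" by (simp add: algebra_simps)
  finally show "F x = F 0 * y1 x + F' 0 * y2 x" using W1 W2 by (simp add: algebra_simps)
  have "F' x = F' x * (y1 x * y2' x - y1' x * y2 x)" using W by simp
  also have "\<dots> = y1' x * (F x * y2' x - F' x * y2 x) - y2' x * (F x * y1' x - F' x * y1 x)" by (simp add: algebra_simps)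
  finally show "F' x = F 0 * y1' x + F' 0 * y2' x" using W1 W2 by (simp add: algebra_simps)
qed

lemma solp_reflect:
  assumes "solp (\<lambda>t. u (- t)) l f f'"
  shows "solp u l (\<lambda>x. f (- x)) (\<lambda>x. - f' (- x))"
proof -
  have c: "continuous_on UNIV f" "continuous_on UNIV f'" using assms unfolding solp_def by blast+
  have e: "f x = f 0 + J 0 x f'" "f' x = f' 0 + J 0 x (\<lambda>t. (complex_of_real (u (- t)) - l) * f t)" for x
    using assms unfolding solp_def by blast+
  have c1: "continuous_on UNIV (\<lambda>x. f (- x))"
    by (rule continuous_on_compose2[OF c(1)]) (auto intro: continuous_intros)
  have c2: "continuous_on UNIV (\<lambda>x. - f' (- x))"
    by (intro continuous_on_minus continuous_on_compose2[OF c(2)]) (auto intro: continuous_intros)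
  have A: "f (- x) = f (- 0) + J 0 x (\<lambda>t. - f' (- t))" for x
    using e(1)[of "- x"] J_reflect[of 0 x f'] by (simp add: J_minus)
  have B: "- f' (- x) = - f' (- 0) + J 0 x (\<lambda>t. (complex_of_real (u t) - l) * f (- t))" for x
    using e(2)[of "- x"] J_reflect[of 0 x "\<lambda>t. (complex_of_real (u (- t)) - l) * f t"] by simp
  show ?thesis unfolding solp_def using c1 c2 A B by blast
qed

lemma is_sol_solp:
  assumes "is_sol u l a b y y'"
  shows "y 0 = a" "y' 0 = b" "continuous_on UNIV y" "continuous_on UNIV y'"
    "\<And>x. y x = a + J 0 x y'" "\<And>x. y' x = b + J 0 x (\<lambda>t. (complex_of_real (u t) - l) * y t)"
proof -
  have h: "continuous_on UNIV y" "continuous_on UNIV y'" "\<forall>x. y x = a + J 0 x y'"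
     "\<forall>x. y' x = b + J 0 x (\<lambda>t. (complex_of_real (u t) - l) * y t)"
    using assms unfolding is_sol_def J_def by blast+
  show "continuous_on UNIV y" "continuous_on UNIV y'" by (fact h(1), fact h(2))
  show "\<And>x. y x = a + J 0 x y'" "\<And>x. y' x = b + J 0 x (\<lambda>t. (complex_of_real (u t) - l) * y t)"
    using h(3,4) by blast+
  show "y 0 = a" using h(3)[rule_format, of 0] by simp
  show "y' 0 = b" using h(4)[rule_format, of 0] by simp
qed

lemma is_sol_solp':
  assumes "is_sol u l a b y y'"
  shows "solp u l y y'"
proof -
  note h = is_sol_solp[OF assms]
  show ?thesis unfolding solp_def h(1,2) using h(3-6) by blast
qed

definition Kop :: "(real \<Rightarrow> real) \<Rightarrow> complex \<Rightarrow> (real \<Rightarrow> complex) \<Rightarrow> real \<Rightarrow> complex" where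
  "Kop v k m x = (J 0 x (\<lambda>t. complex_of_real (v t) * m t)
      + exp (- 2 * \<i> * k * complex_of_real x) *
        Tl x (\<lambda>t. exp (2 * \<i> * k * complex_of_real t) * (complex_of_real (v t) * m t))) / (2 * \<i> * k)"

definition wb :: "real \<Rightarrow> (real \<Rightarrow> complex) \<Rightarrow> bool" where
  "wb B m \<longleftrightarrow> continuous_on UNIV m \<and> (\<forall>t. norm (m t) \<le> B * exp \<bar>t\<bar>)"

lemma norm_exp_ikt: "norm (exp (2 * \<i> * k * complex_of_real t)) = exp (- 2 * Im k * t)"
  by (simp add: norm_exp_eq_Re)

lemma norm_exp_ikt': "norm (exp (- 2 * \<i> * k * complex_of_real t)) = exp (2 * Im k * t)"
  by (simp add: norm_exp_eq_Re)

lemma pot_M: "pot v M \<Longrightarrow> 0 \<le> M"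
proof -
  assume "pot v M"
  then have "\<bar>v 0\<bar> \<le> M" unfolding pot_def by blast
  then show ?thesis using abs_ge_zero[of "v 0"] by linarith
qed

lemma pot_v: "pot v M \<Longrightarrow> norm (complex_of_real (v t)) \<le> M"
  unfolding pot_def by auto

lemma pot_meas: "pot v M \<Longrightarrow> v \<in> borel_measurable borel"
  unfolding pot_def by auto

lemma wb_B0: "wb B m \<Longrightarrow> 0 \<le> B"
proof -
  assume "wb B m"
  then have "norm (m 0) \<le> B" unfolding wb_def by (metis abs_zero exp_zero mult.right_neutral)
  then show ?thesis by (rule order_trans[OF norm_ge_zero])
qed

lemma tail_est:
  assumes p: "pot v M" and k: "Im k > 1/2" and mm: "m \<in> borel_measurable borel"
    and mb: "\<And>t. norm (m t) \<le> B * exp \<bar>t\<bar>"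
  shows "set_integrable lborel {x..} (\<lambda>t. exp (2 * \<i> * k * complex_of_real t) * (complex_of_real (v t) * m t))"
    and "norm (exp (- 2 * \<i> * k * complex_of_real x) *
           Tl x (\<lambda>t. exp (2 * \<i> * k * complex_of_real t) * (complex_of_real (v t) * m t)))
         \<le> M * B * exp \<bar>x\<bar> / (2 * Im k - 1)"
proof -
  define c where "c = 2 * Im k - 1"
  have c: "c > 0" using k unfolding c_def by simp
  have M0: "0 \<le> M" by (rule pot_M[OF p])
  have "norm (m 0) \<le> B" using mb[of 0] by simp
  then have B0: "0 \<le> B" by (rule order_trans[OF norm_ge_zero])
  have vm[measurable]: "v \<in> borel_measurable borel" by (rule pot_meas[OF p])
  note mm[measurable]
  define h where "h t = exp (2 * \<i> * k * complex_of_real t) * (complex_of_real (v t) * m t)" for t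
  have hm: "h \<in> borel_measurable borel" unfolding h_def by measurable
  have hb: "norm (h t) \<le> (M * B * exp (\<bar>x\<bar> - x)) * exp (- c * t)" if t: "t \<ge> x" for t
  proof -
    have "norm (h t) = exp (- 2 * Im k * t) * (norm (complex_of_real (v t)) * norm (m t))"
      unfolding h_def norm_mult norm_exp_ikt by simp
    also have "\<dots> \<le> exp (- 2 * Im k * t) * (M * (B * exp \<bar>t\<bar>))"
      by (intro mult_left_mono mult_mono pot_v[OF p] mb) (use M0 in auto)
    also have "\<dots> = M * B * exp (- 2 * Im k * t + \<bar>t\<bar>)" by (simp only: exp_add mult_ac)
    also have "\<dots> \<le> M * B * exp (\<bar>x\<bar> - x - c * t)"
      using t M0 B0 unfolding c_def by (intro mult_left_mono) (auto simp: algebra_simps)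
    also have "\<dots> = (M * B * exp (\<bar>x\<bar> - x)) * exp (- c * t)" by (simp add: mult.assoc flip: exp_add)
    finally show ?thesis .
  qed
  from tail_int[OF hm c hb]
  show "set_integrable lborel {x..} (\<lambda>t. exp (2 * \<i> * k * complex_of_real t) * (complex_of_real (v t) * m t))"
    unfolding h_def by blast
  have "norm (Tl x h) \<le> M * B * exp (\<bar>x\<bar> - x) * exp (- c * x) / c" using tail_int[OF hm c hb] by blast
  then have "norm (exp (- 2 * \<i> * k * complex_of_real x) * Tl x h) \<le> exp (2 * Im k * x) * (M * B * exp (\<bar>x\<bar> - x) * exp (- c * x) / c)"
    unfolding norm_mult norm_exp_ikt' by (rule mult_left_mono) simp
  also have "\<dots> = M * B * (exp (2 * Im k * x) * exp (\<bar>x\<bar> - x) * exp (- c * x)) / c" by simp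
  also have "exp (2 * Im k * x) * exp (\<bar>x\<bar> - x) * exp (- c * x) = exp \<bar>x\<bar>"
    unfolding exp_add[symmetric] c_def by (simp add: algebra_simps)
  finally show "norm (exp (- 2 * \<i> * k * complex_of_real x) *
           Tl x (\<lambda>t. exp (2 * \<i> * k * complex_of_real t) * (complex_of_real (v t) * m t)))
         \<le> M * B * exp \<bar>x\<bar> / (2 * Im k - 1)" unfolding h_def c_def by simp
qed

lemma J_vm_bound:
  assumes p: "pot v M" and m: "wb B m"
  shows "norm (J 0 x (\<lambda>t. complex_of_real (v t) * m t)) \<le> M * B * exp \<bar>x\<bar>"
proof -
  have mc: "continuous_on UNIV m" and mb: "\<And>t. norm (m t) \<le> B * exp \<bar>t\<bar>" using m unfolding wb_def by auto
  have "norm (J 0 x (\<lambda>t. complex_of_real (v t) * m t)) \<le> (M * B) * exp \<bar>x\<bar>"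
  proof (rule J_exp_bound)
    show "loc (\<lambda>t. complex_of_real (v t) * m t)" by (intro loc_mult loc_pot[OF p] loc_cont[OF mc])
    fix t show "norm (complex_of_real (v t) * m t) \<le> M * B * exp \<bar>t\<bar>"
      using prod_bound[OF pot_v[OF p] mb[of t]] by (simp add: mult.assoc)
  qed
  then show ?thesis by simp
qed

lemma Kop_bound:
  assumes p: "pot v M" and k: "Im k \<ge> 1" and m: "wb B m"
  shows "norm (Kop v k m x) \<le> M / norm k * B * exp \<bar>x\<bar>"
proof -
  have mc: "continuous_on UNIV m" and mb: "\<And>t. norm (m t) \<le> B * exp \<bar>t\<bar>" using m unfolding wb_def by auto
  have mm: "m \<in> borel_measurable borel" by (rule borel_measurable_continuous_onI[OF mc])
  have M0: "0 \<le> M" by (rule pot_M[OF p])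
  have B0: "0 \<le> B" by (rule wb_B0[OF m])
  have k0: "norm k > 0" using k by (auto simp: zero_less_norm_iff)
  have b1: "norm (J 0 x (\<lambda>t. complex_of_real (v t) * m t)) \<le> M * B * exp \<bar>x\<bar>" by (rule J_vm_bound[OF p m])
  have b2: "norm (exp (- 2 * \<i> * k * complex_of_real x) *
           Tl x (\<lambda>t. exp (2 * \<i> * k * complex_of_real t) * (complex_of_real (v t) * m t)))
         \<le> M * B * exp \<bar>x\<bar> / (2 * Im k - 1)" by (rule tail_est(2)[OF p _ mm mb]) (use k in auto)
  have b3: "M * B * exp \<bar>x\<bar> / (2 * Im k - 1) \<le> M * B * exp \<bar>x\<bar> / 1"
    using k M0 B0 by (intro divide_left_mono) auto
  have "norm (Kop v k m x) = norm (J 0 x (\<lambda>t. complex_of_real (v t) * m t)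
      + exp (- 2 * \<i> * k * complex_of_real x) *
        Tl x (\<lambda>t. exp (2 * \<i> * k * complex_of_real t) * (complex_of_real (v t) * m t))) / (2 * norm k)"
    unfolding Kop_def by (simp add: norm_divide norm_mult)
  also have "\<dots> \<le> (M * B * exp \<bar>x\<bar> + M * B * exp \<bar>x\<bar>) / (2 * norm k)"
    using b1 b2 b3 k0 by (intro divide_right_mono order_trans[OF norm_triangle_ineq add_mono]) auto
  also have "\<dots> = M / norm k * B * exp \<bar>x\<bar>" using k0 by (simp add: field_simps)
  finally show ?thesis .
qed


lemma tail_decomp:
  assumes p: "pot v M" and k: "Im k \<ge> 1" and m: "wb B m"
  shows "Tl x (\<lambda>t. exp (2 * \<i> * k * complex_of_real t) * (complex_of_real (v t) * m t))
       = Tl 0 (\<lambda>t. exp (2 * \<i> * k * complex_of_real t) * (complex_of_real (v t) * m t))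
         - J 0 x (\<lambda>t. exp (2 * \<i> * k * complex_of_real t) * (complex_of_real (v t) * m t))"
proof -
  have mc: "continuous_on UNIV m" and mb: "\<And>t. norm (m t) \<le> B * exp \<bar>t\<bar>" using m unfolding wb_def by auto
  have mm: "m \<in> borel_measurable borel" by (rule borel_measurable_continuous_onI[OF mc])
  have lh: "loc (\<lambda>t. exp (2 * \<i> * k * complex_of_real t) * (complex_of_real (v t) * m t))"
    by (intro loc_mult loc_pot[OF p] loc_cont[OF mc] loc_cont) (auto intro!: continuous_intros)
  have "Tl x (\<lambda>t. exp (2 * \<i> * k * complex_of_real t) * (complex_of_real (v t) * m t))
     = J x 0 (\<lambda>t. exp (2 * \<i> * k * complex_of_real t) * (complex_of_real (v t) * m t))
       + Tl 0 (\<lambda>t. exp (2 * \<i> * k * complex_of_real t) * (complex_of_real (v t) * m t))"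
    by (rule Tl_split[OF lh tail_est(1)[OF p _ mm mb]]) (use k in auto)
  then show ?thesis using J_rev[of x 0] by simp
qed

lemma Kop_cont:
  assumes p: "pot v M" and k: "Im k \<ge> 1" and m: "wb B m"
  shows "continuous_on UNIV (Kop v k m)"
proof -
  have mc: "continuous_on UNIV m" using m unfolding wb_def by auto
  have lh: "loc (\<lambda>t. exp (2 * \<i> * k * complex_of_real t) * (complex_of_real (v t) * m t))"
    by (intro loc_mult loc_pot[OF p] loc_cont[OF mc] loc_cont) (auto intro!: continuous_intros)
  have lvm: "loc (\<lambda>t. complex_of_real (v t) * m t)" by (intro loc_mult loc_pot[OF p] loc_cont[OF mc])
  have eq: "Kop v k m = (\<lambda>x. (J 0 x (\<lambda>t. complex_of_real (v t) * m t)
      + exp (- 2 * \<i> * k * complex_of_real x) *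
        (Tl 0 (\<lambda>t. exp (2 * \<i> * k * complex_of_real t) * (complex_of_real (v t) * m t))
         - J 0 x (\<lambda>t. exp (2 * \<i> * k * complex_of_real t) * (complex_of_real (v t) * m t)))) / (2 * \<i> * k))"
  proof (rule ext)
    fix x show "Kop v k m x = (J 0 x (\<lambda>t. complex_of_real (v t) * m t)
      + exp (- 2 * \<i> * k * complex_of_real x) *
        (Tl 0 (\<lambda>t. exp (2 * \<i> * k * complex_of_real t) * (complex_of_real (v t) * m t))
         - J 0 x (\<lambda>t. exp (2 * \<i> * k * complex_of_real t) * (complex_of_real (v t) * m t)))) / (2 * \<i> * k)"
      unfolding Kop_def by (subst tail_decomp[OF p k m, of x]) (rule refl)
  qed
  have c1: "continuous_on UNIV (\<lambda>x. J 0 x (\<lambda>t. complex_of_real (v t) * m t))" by (rule J_cont[OF lvm])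
  have c2: "continuous_on UNIV (\<lambda>x. J 0 x (\<lambda>t. exp (2 * \<i> * k * complex_of_real t) * (complex_of_real (v t) * m t)))"
    by (rule J_cont[OF lh])
  have c3: "continuous_on UNIV (\<lambda>x::real. exp (- 2 * \<i> * k * complex_of_real x))"
    by (intro continuous_intros)
  have k0: "2 * \<i> * k \<noteq> 0" using k by auto
  show ?thesis unfolding eq
    by (rule continuous_on_divide[OF continuous_on_add[OF c1 continuous_on_mult[OF c3 continuous_on_diff[OF continuous_on_const c2]]] continuous_on_const])
      (use k0 in auto)
qed

lemma Kop_lin:
  assumes p: "pot v M" and k: "Im k \<ge> 1" and f: "wb B1 f" and g: "wb B2 g"
  shows "Kop v k (\<lambda>t. f t - c * g t) x = Kop v k f x - c * Kop v k g x"
proof -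
  have fc: "continuous_on UNIV f" and fb: "\<And>t. norm (f t) \<le> B1 * exp \<bar>t\<bar>" using f unfolding wb_def by auto
  have gc: "continuous_on UNIV g" and gb: "\<And>t. norm (g t) \<le> B2 * exp \<bar>t\<bar>" using g unfolding wb_def by auto
  have fm: "f \<in> borel_measurable borel" by (rule borel_measurable_continuous_onI[OF fc])
  have gm: "g \<in> borel_measurable borel" by (rule borel_measurable_continuous_onI[OF gc])
  define e where "e t = exp (2 * \<i> * k * complex_of_real t)" for t
  define vv where "vv t = complex_of_real (v t)" for t
  have lf: "loc (\<lambda>t. vv t * f t)" unfolding vv_def by (intro loc_mult loc_pot[OF p] loc_cont[OF fc])
  have lg: "loc (\<lambda>t. c * (vv t * g t))" unfolding vv_def by (intro loc_cmult loc_mult loc_pot[OF p] loc_cont[OF gc])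
  have A: "J 0 x (\<lambda>t. vv t * (f t - c * g t)) = J 0 x (\<lambda>t. vv t * f t) - c * J 0 x (\<lambda>t. vv t * g t)"
  proof -
    have "J 0 x (\<lambda>t. vv t * (f t - c * g t)) = J 0 x (\<lambda>t. vv t * f t - c * (vv t * g t))"
      by (simp add: algebra_simps)
    also have "\<dots> = J 0 x (\<lambda>t. vv t * f t) - J 0 x (\<lambda>t. c * (vv t * g t))" by (rule J_diff[OF lf lg])
    finally show ?thesis by (simp add: J_cmult)
  qed
  have i1: "set_integrable lborel {x..} (\<lambda>t. e t * (vv t * f t))"
    unfolding e_def vv_def by (rule tail_est(1)[OF p _ fm fb]) (use k in auto)
  have i2: "set_integrable lborel {x..} (\<lambda>t. - c * (e t * (vv t * g t)))"
    unfolding e_def vv_def by (intro set_integrable_mult_right tail_est(1)[OF p _ gm gb]) (use k in auto)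
  have B: "Tl x (\<lambda>t. e t * (vv t * (f t - c * g t))) = Tl x (\<lambda>t. e t * (vv t * f t)) - c * Tl x (\<lambda>t. e t * (vv t * g t))"
  proof -
    have "Tl x (\<lambda>t. e t * (vv t * (f t - c * g t))) = Tl x (\<lambda>t. e t * (vv t * f t) + - c * (e t * (vv t * g t)))"
      by (simp add: algebra_simps)
    also have "\<dots> = Tl x (\<lambda>t. e t * (vv t * f t)) + Tl x (\<lambda>t. - c * (e t * (vv t * g t)))"
      by (rule Tl_add[OF i1 i2])
    also have "Tl x (\<lambda>t. - c * (e t * (vv t * g t))) = - c * Tl x (\<lambda>t. e t * (vv t * g t))"
      by (rule Tl_cmult)
    finally show ?thesis by simp
  qed
  have k0: "2 * \<i> * k \<noteq> 0" using k by auto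
  define E where "E = exp (- 2 * \<i> * k * complex_of_real x)"
  have "Kop v k (\<lambda>t. f t - c * g t) x = (J 0 x (\<lambda>t. vv t * (f t - c * g t)) + E * Tl x (\<lambda>t. e t * (vv t * (f t - c * g t)))) / (2 * \<i> * k)"
    by (simp only: Kop_def e_def vv_def E_def)
  also have "\<dots> = ((J 0 x (\<lambda>t. vv t * f t) - c * J 0 x (\<lambda>t. vv t * g t))
      + E * (Tl x (\<lambda>t. e t * (vv t * f t)) - c * Tl x (\<lambda>t. e t * (vv t * g t)))) / (2 * \<i> * k)"
    by (simp only: A B)
  also have "\<dots> = (J 0 x (\<lambda>t. vv t * f t) + E * Tl x (\<lambda>t. e t * (vv t * f t))) / (2 * \<i> * k)
     - c * ((J 0 x (\<lambda>t. vv t * g t) + E * Tl x (\<lambda>t. e t * (vv t * g t))) / (2 * \<i> * k))"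
    using k0 by (simp add: field_simps)
  also have "\<dots> = Kop v k f x - c * Kop v k g x"
    by (simp only: Kop_def e_def vv_def E_def)
  finally show ?thesis .
qed

lemma Kop_unique:
  assumes p: "pot v M" and k: "Im k \<ge> 1" and q: "M / norm k < 1" and h: "wb B h"
    and hf: "\<And>x. h x = Kop v k h x"
  shows "h x = 0"
proof -
  define q where "q = M / norm k"
  have q0: "0 \<le> q" unfolding q_def using pot_M[OF p] by simp
  have hc: "continuous_on UNIV h" using h unfolding wb_def by auto
  have all: "wb (B * q ^ n) h" for n
  proof (induction n)
    case 0 then show ?case using h by simp
  next
    case (Suc n)
    have "norm (h t) \<le> B * q ^ Suc n * exp \<bar>t\<bar>" for t
    proof -
      have "norm (h t) = norm (Kop v k h t)" using hf[of t] by simp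
      also have "\<dots> \<le> q * (B * q ^ n) * exp \<bar>t\<bar>" using Kop_bound[OF p k Suc.IH, of t] by (simp add: q_def)
      finally show ?thesis by (simp add: algebra_simps)
    qed
    then show ?case using hc unfolding wb_def by auto
  qed
  have "(\<lambda>n. B * q ^ n * exp \<bar>x\<bar>) \<longlonglongrightarrow> B * 0 * exp \<bar>x\<bar>"
    by (intro tendsto_intros LIMSEQ_power_zero) (use q q0 in \<open>auto simp: q_def\<close>)
  then have lim: "(\<lambda>n. B * q ^ n * exp \<bar>x\<bar>) \<longlonglongrightarrow> 0" by simp
  have "\<exists>N. \<forall>n\<ge>N. norm (h x) \<le> B * q ^ n * exp \<bar>x\<bar>" using all unfolding wb_def by blast
  then have "norm (h x) \<le> 0" by (rule LIMSEQ_le_const[OF lim])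
  then show ?thesis by simp
qed

lemma Kop_exists:
  assumes p: "pot v M" and k: "Im k \<ge> 1" and q: "M / norm k \<le> 1/2"
  shows "\<exists>m. wb 2 m \<and> (\<forall>x. m x = 1 + Kop v k m x)"
proof -
  define W where "W t = complex_of_real (exp \<bar>t\<bar>)" for t
  have W0: "W t \<noteq> 0" for t unfolding W_def by simp
  have nW: "norm (W t) = exp \<bar>t\<bar>" for t unfolding W_def by simp
  have cW: "continuous_on UNIV W" unfolding W_def by (intro continuous_intros)
  define mk where "mk g t = W t * apply_bcontfun g t" for g :: "real \<Rightarrow>\<^sub>C complex" and t
  have wbg: "wb (norm g) (mk g)" for g
    unfolding wb_def mk_def
  proof (intro conjI allI)
    show "continuous_on UNIV (\<lambda>t. W t * apply_bcontfun g t)" by (intro continuous_intros cW) auto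
    fix t show "norm (W t * apply_bcontfun g t) \<le> norm g * exp \<bar>t\<bar>"
      unfolding norm_mult nW using norm_bounded[of g t] by (simp add: mult.commute mult_left_mono)
  qed
  define F where "F g x = (1 + Kop v k (mk g) x) / W x" for g x
  have Fin: "F g \<in> bcontfun" for g
  proof (rule bcontfun_normI)
    show "continuous_on UNIV (F g)" unfolding F_def
      by (intro continuous_intros Kop_cont[OF p k wbg] cW) (use W0 in auto)
    fix x
    have "norm (1 + Kop v k (mk g) x) \<le> 1 + M / norm k * norm g * exp \<bar>x\<bar>"
      by (rule order_trans[OF norm_triangle_ineq add_mono[OF _ Kop_bound[OF p k wbg]]]) simp
    also have "\<dots> \<le> (1 + M / norm k * norm g) * exp \<bar>x\<bar>"
      using pot_M[OF p] by (simp add: algebra_simps)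
    finally show "norm (F g x) \<le> 1 + M / norm k * norm g"
      unfolding F_def norm_divide nW by (simp add: divide_le_eq)
  qed
  define \<Phi> where "\<Phi> g = Bcontfun (F g)" for g
  have \<Phi>app: "apply_bcontfun (\<Phi> g) x = F g x" for g x
    unfolding \<Phi>_def using Bcontfun_inverse[OF Fin] by simp
  have contr: "dist (\<Phi> g1) (\<Phi> g2) \<le> 1/2 * dist g1 g2" for g1 g2
  proof (rule dist_bound)
    fix x
    have d: "wb (dist g1 g2) (\<lambda>t. mk g1 t - 1 * mk g2 t)"
      unfolding wb_def
    proof (intro conjI allI)
      show "continuous_on UNIV (\<lambda>t. mk g1 t - 1 * mk g2 t)" unfolding mk_def by (intro continuous_intros cW) auto
      fix t
      have "mk g1 t - 1 * mk g2 t = W t * (apply_bcontfun g1 t - apply_bcontfun g2 t)" unfolding mk_def by (simp add: algebra_simps)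
      then have "norm (mk g1 t - 1 * mk g2 t) = exp \<bar>t\<bar> * dist (apply_bcontfun g1 t) (apply_bcontfun g2 t)"
        by (simp add: norm_mult nW dist_norm)
      then show "norm (mk g1 t - 1 * mk g2 t) \<le> dist g1 g2 * exp \<bar>t\<bar>"
        using dist_bounded[of g1 t g2] by (simp add: mult.commute mult_left_mono)
    qed
    have "dist (apply_bcontfun (\<Phi> g1) x) (apply_bcontfun (\<Phi> g2) x) = norm (Kop v k (mk g1) x - 1 * Kop v k (mk g2) x) / exp \<bar>x\<bar>"
      unfolding \<Phi>app F_def dist_norm by (simp add: diff_divide_distrib[symmetric] norm_divide nW)
    also have "Kop v k (mk g1) x - 1 * Kop v k (mk g2) x = Kop v k (\<lambda>t. mk g1 t - 1 * mk g2 t) x"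
      by (rule Kop_lin[OF p k wbg wbg, symmetric])
    also have "norm \<dots> \<le> M / norm k * dist g1 g2 * exp \<bar>x\<bar>" by (rule Kop_bound[OF p k d])
    also have "\<dots> \<le> 1/2 * dist g1 g2 * exp \<bar>x\<bar>" by (intro mult_right_mono q) auto
    finally show "dist (apply_bcontfun (\<Phi> g1) x) (apply_bcontfun (\<Phi> g2) x) \<le> 1/2 * dist g1 g2"
      by (simp add: divide_le_eq)
  qed
  obtain g where g: "\<Phi> g = g" using banach_fix_type[of "1/2" \<Phi>] contr by auto
  define m where "m = mk g"
  have mfix: "m x = 1 + Kop v k m x" for x
  proof -
    have "apply_bcontfun g x = F g x" using \<Phi>app[of g x] g by simp
    then show ?thesis unfolding m_def F_def by (simp add: mk_def W0)
  qed
  have mc: "continuous_on UNIV m" using wbg[of g] unfolding m_def wb_def by auto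
  have it: "wb (2 + norm g * (1/2) ^ n) m" for n
  proof (induction n)
    case 0
    have "norm (m t) \<le> (2 + norm g * (1/2) ^ 0) * exp \<bar>t\<bar>" for t
    proof -
      have "norm (m t) \<le> norm g * exp \<bar>t\<bar>" using wbg[of g] unfolding m_def wb_def by blast
      also have "\<dots> \<le> (2 + norm g * (1/2) ^ 0) * exp \<bar>t\<bar>" by (intro mult_right_mono) auto
      finally show ?thesis .
    qed
    then show ?case using mc unfolding wb_def by blast
  next
    case (Suc n)
    have "norm (m t) \<le> (2 + norm g * (1/2) ^ Suc n) * exp \<bar>t\<bar>" for t
    proof -
      have a: "norm (m t) \<le> 1 + norm (Kop v k m t)" using norm_triangle_ineq[of 1 "Kop v k m t"] mfix[of t] by simp
      have "norm (Kop v k m t) \<le> M / norm k * (2 + norm g * (1/2) ^ n) * exp \<bar>t\<bar>" by (rule Kop_bound[OF p k Suc.IH])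
      also have "\<dots> \<le> 1/2 * (2 + norm g * (1/2) ^ n) * exp \<bar>t\<bar>" by (intro mult_right_mono q) auto
      also have "\<dots> = exp \<bar>t\<bar> + norm g * (1/2) ^ Suc n * exp \<bar>t\<bar>" by (simp add: algebra_simps)
      finally have b: "norm (Kop v k m t) \<le> exp \<bar>t\<bar> + norm g * (1/2) ^ Suc n * exp \<bar>t\<bar>" .
      have c: "1 \<le> exp \<bar>t\<bar>" by simp
      have "(2 + norm g * (1/2) ^ Suc n) * exp \<bar>t\<bar> = exp \<bar>t\<bar> + exp \<bar>t\<bar> + norm g * (1/2) ^ Suc n * exp \<bar>t\<bar>"
        by (simp add: algebra_simps)
      then show ?thesis using a b c by linarith
    qed
    then show ?case using mc unfolding wb_def by auto
  qed
  have "norm (m x) \<le> 2 * exp \<bar>x\<bar>" for x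
  proof -
    have "(\<lambda>n. (2 + norm g * (1/2) ^ n) * exp \<bar>x\<bar>) \<longlonglongrightarrow> (2 + norm g * 0) * exp \<bar>x\<bar>"
      by (intro tendsto_intros LIMSEQ_power_zero) auto
    then have lim: "(\<lambda>n. (2 + norm g * (1/2) ^ n) * exp \<bar>x\<bar>) \<longlonglongrightarrow> 2 * exp \<bar>x\<bar>" by simp
    have "\<exists>N. \<forall>n\<ge>N. (2 + norm g * (1/2) ^ n) * exp \<bar>x\<bar> \<ge> norm (m x)" using it unfolding wb_def by blast
    then show ?thesis by (rule LIMSEQ_le_const[OF lim])
  qed
  then have "wb 2 m" using mc unfolding wb_def by auto
  then show ?thesis using mfix by blast
qed

lemma exp_vd: "((\<lambda>t::real. exp (c * complex_of_real t)) has_vector_derivative (c * exp (c * complex_of_real t))) (at t)"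
proof -
  have "((\<lambda>z. exp (c * z)) has_field_derivative c * exp (c * complex_of_real t)) (at (complex_of_real t))"
    by (auto intro!: derivative_eq_intros simp: mult.commute)
  from has_vector_derivative_real_field[OF this, of UNIV] show ?thesis by simp
qed

lemma J_divc: "J a b (\<lambda>t. f t / c) = J a b f / c"
  using J_multc[of a b f "inverse c"] by (simp add: divide_inverse)

lemma J_lin4:
  assumes "loc f1" "loc f2" "loc f3" "loc f4"
  shows "J a b (\<lambda>t. c1 * f1 t + c2 * f2 t + c3 * f3 t + c4 * f4 t)
       = c1 * J a b f1 + c2 * J a b f2 + c3 * J a b f3 + c4 * J a b f4"
  using assms by (simp add: J_add J_cmult loc_add loc_cmult)

definition Ffun :: "complex \<Rightarrow> (real \<Rightarrow> complex) \<Rightarrow> real \<Rightarrow> complex" where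
  "Ffun k m x = exp (\<i> * k * complex_of_real x) * m x"

definition Ifun :: "(real \<Rightarrow> real) \<Rightarrow> complex \<Rightarrow> (real \<Rightarrow> complex) \<Rightarrow> real \<Rightarrow> complex" where
  "Ifun v k m x = exp (- 2 * \<i> * k * complex_of_real x) *
     Tl x (\<lambda>t. exp (2 * \<i> * k * complex_of_real t) * (complex_of_real (v t) * m t))"

definition Gfun :: "(real \<Rightarrow> real) \<Rightarrow> complex \<Rightarrow> (real \<Rightarrow> complex) \<Rightarrow> real \<Rightarrow> complex" where
  "Gfun v k m x = exp (\<i> * k * complex_of_real x) * (\<i> * k * m x - Ifun v k m x)"

lemma sol_F:
  assumes p: "pot v M" and k: "Im k \<ge> 1" and m: "wb B m" and mf: "\<And>x. m x = 1 + Kop v k m x"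
  shows "solp v (k\<^sup>2) (Ffun k m) (Gfun v k m)"
proof -
  have k0: "k \<noteq> 0" using k by auto
  have mc: "continuous_on UNIV m" using m unfolding wb_def by auto
  define ep where "ep t = exp ((\<i> * k) * complex_of_real t)" for t :: real
  define em where "em t = exp ((- (\<i> * k)) * complex_of_real t)" for t :: real
  have epem: "ep t * em t = 1" for t unfolding ep_def em_def by (simp flip: exp_add)
  have e2: "exp (2 * \<i> * k * complex_of_real t) = ep t * ep t" for t
  proof -
    have "2 * \<i> * k * complex_of_real t = \<i> * k * complex_of_real t + \<i> * k * complex_of_real t" by simp
    then show ?thesis unfolding ep_def by (simp only: exp_add)
  qed
  have e2': "exp (- 2 * \<i> * k * complex_of_real t) = em t * em t" for t
  proof -
    have "- 2 * \<i> * k * complex_of_real t = - (\<i> * k) * complex_of_real t + - (\<i> * k) * complex_of_real t" by simp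
    then show ?thesis unfolding em_def by (simp only: exp_add)
  qed
  have ep0: "ep 0 = 1" "em 0 = 1" unfolding ep_def em_def by simp_all
  have epd: "(ep has_vector_derivative (\<i> * k) * ep t) (at t)" for t
    unfolding ep_def by (rule exp_vd)
  have emd: "(em has_vector_derivative (- (\<i> * k)) * em t) (at t)" for t
    unfolding em_def by (rule exp_vd)
  have cep: "continuous_on UNIV ep" unfolding ep_def by (intro continuous_intros)
  have cem: "continuous_on UNIV em" unfolding em_def by (intro continuous_intros)
  have cep': "continuous_on UNIV (\<lambda>t. (\<i> * k) * ep t)" by (intro continuous_intros cep)
  have cem': "continuous_on UNIV (\<lambda>t. (- (\<i> * k)) * em t)" by (intro continuous_intros cem)
  define F where "F = Ffun k m"
  have F: "F t = ep t * m t" for t unfolding F_def Ffun_def ep_def by simp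
  have cF: "continuous_on UNIV F" unfolding F_def Ffun_def by (intro continuous_intros mc)
  define g where "g t = complex_of_real (v t) * F t" for t
  have lg: "loc g" unfolding g_def by (intro loc_mult loc_pot[OF p] loc_cont[OF cF])
  have lemg: "loc (\<lambda>t. em t * g t)" by (intro loc_mult loc_cont[OF cem] lg)
  have lepg: "loc (\<lambda>t. ep t * g t)" by (intro loc_mult loc_cont[OF cep] lg)
  define A where "A x = J 0 x (\<lambda>t. em t * g t)" for x
  define At where "At x = J 0 x (\<lambda>t. ep t * g t)" for x
  have cA: "continuous_on UNIV A" unfolding A_def by (rule J_cont[OF lemg])
  have cAt: "continuous_on UNIV At" unfolding At_def by (rule J_cont[OF lepg])
  have vm1: "(\<lambda>t. complex_of_real (v t) * m t) = (\<lambda>t. em t * g t)"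
  proof
    fix t have "em t * g t = (ep t * em t) * (complex_of_real (v t) * m t)" unfolding g_def F by (simp add: algebra_simps)
    then show "complex_of_real (v t) * m t = em t * g t" by (simp add: epem)
  qed
  have vm2: "(\<lambda>t. exp (2 * \<i> * k * complex_of_real t) * (complex_of_real (v t) * m t)) = (\<lambda>t. ep t * g t)"
  proof
    fix t have "ep t * g t = ep t * ep t * (complex_of_real (v t) * m t)" unfolding g_def F by (simp add: algebra_simps)
    then show "exp (2 * \<i> * k * complex_of_real t) * (complex_of_real (v t) * m t) = ep t * g t" by (simp only: e2)
  qed
  define C where "C = Tl 0 (\<lambda>t. ep t * g t)"
  have Tlx: "Tl x (\<lambda>t. ep t * g t) = C - At x" for x
    using tail_decomp[OF p k m, of x] unfolding vm2 C_def At_def by simp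
  have mform: "m x = 1 + (A x + em x * em x * (C - At x)) / (2 * \<i> * k)" for x
    using mf[of x] unfolding Kop_def vm1 vm2 e2' Tlx A_def by simp
  have Ifm: "Ifun v k m x = em x * em x * (C - At x)" for x
    unfolding Ifun_def vm2 e2' Tlx by simp
  have Fform: "F x = ep x + (ep x * A x + em x * (C - At x)) / (2 * \<i> * k)" for x
  proof -
    have "F x = ep x * m x" by (rule F)
    also have "\<dots> = ep x + (ep x * A x + (ep x * em x) * em x * (C - At x)) / (2 * \<i> * k)"
      unfolding mform[of x] by (simp add: algebra_simps add_divide_distrib)
    finally show ?thesis by (simp add: epem)
  qed
  have Gform: "Gfun v k m x = \<i> * k * ep x + (ep x * A x - em x * (C - At x)) / 2" for x
  proof -
    have "Gfun v k m x = ep x * (\<i> * k * m x - em x * em x * (C - At x))"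
      unfolding Gfun_def Ifm ep_def by simp
    also have "\<dots> = \<i> * k * ep x + \<i> * k * (ep x * A x + (ep x * em x) * em x * (C - At x)) / (2 * \<i> * k)
        - (ep x * em x) * em x * (C - At x)"
      unfolding mform[of x] by (simp add: algebra_simps add_divide_distrib)
    also have "\<dots> = \<i> * k * ep x + \<i> * k * (ep x * A x + em x * (C - At x)) / (2 * \<i> * k)
        - em x * (C - At x)" by (simp only: epem mult_1_left)
    also have "\<dots> = \<i> * k * ep x + (ep x * A x - em x * (C - At x)) / 2"
      using k0 by (simp add: field_simps)
    finally show ?thesis .
  qed
  have cG: "continuous_on UNIV (Gfun v k m)"
  proof -
    have "Gfun v k m = (\<lambda>x. \<i> * k * ep x + (ep x * A x - em x * (C - At x)) / 2)" using Gform by auto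
    then show ?thesis by (simp add: continuous_intros cep cem cA cAt)
  qed
  have A0: "A 0 = 0" "At 0 = 0" unfolding A_def At_def by simp_all
  have IBP1: "ep x * A x = J 0 x (\<lambda>t. (\<i> * k) * ep t * A t + g t)" for x
  proof -
    have "ep x * A x = J 0 x (\<lambda>t. (\<i> * k) * ep t * A t + ep t * (em t * g t))"
      unfolding A_def by (rule IBP[OF epd cep' lemg])
    also have "\<dots> = J 0 x (\<lambda>t. (\<i> * k) * ep t * A t + g t)"
      by (rule J_cong) (simp add: epem mult.assoc[symmetric] A_def)
    finally show ?thesis .
  qed
  have IBP2: "em x * At x = J 0 x (\<lambda>t. (- (\<i> * k)) * em t * At t + g t)" for x
  proof -
    have "em x * At x = J 0 x (\<lambda>t. (- (\<i> * k)) * em t * At t + em t * (ep t * g t))"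
      unfolding At_def by (rule IBP[OF emd cem' lepg])
    also have "\<dots> = J 0 x (\<lambda>t. (- (\<i> * k)) * em t * At t + g t)"
      by (rule J_cong) (simp add: epem mult.assoc[symmetric] At_def mult.commute[of "em _"])
    finally show ?thesis .
  qed
  have FTC1: "ep x - 1 = J 0 x (\<lambda>t. (\<i> * k) * ep t)" for x
    using J_FTC[OF epd cep', of 0 x] ep0 by simp
  have FTC2: "em x - 1 = J 0 x (\<lambda>t. (- (\<i> * k)) * em t)" for x
    using J_FTC[OF emd cem', of 0 x] ep0 by simp
  have l1: "loc (\<lambda>t. (\<i> * k) * ep t)" by (rule loc_cont[OF cep'])
  have l2: "loc (\<lambda>t. (\<i> * k) * ep t * A t + g t)" by (intro loc_add loc_mult lg loc_cont[OF cep'] loc_cont[OF cA])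
  have l3: "loc (\<lambda>t. (- (\<i> * k)) * em t)" by (rule loc_cont[OF cem'])
  have l4: "loc (\<lambda>t. (- (\<i> * k)) * em t * At t + g t)" by (intro loc_add loc_mult lg loc_cont[OF cem'] loc_cont[OF cAt])
  have eq1: "F x = F 0 + J 0 x (Gfun v k m)" for x
  proof -
    have "F x - F 0 = (ep x - 1) + (ep x * A x + C * (em x - 1) - em x * At x) / (2 * \<i> * k)"
      unfolding Fform A0 ep0 by (simp add: algebra_simps diff_divide_distrib add_divide_distrib)
    also have "\<dots> = 1 * J 0 x (\<lambda>t. (\<i> * k) * ep t) + (1 / (2 * \<i> * k)) * J 0 x (\<lambda>t. (\<i> * k) * ep t * A t + g t)
       + (C / (2 * \<i> * k)) * J 0 x (\<lambda>t. (- (\<i> * k)) * em t) + (- 1 / (2 * \<i> * k)) * J 0 x (\<lambda>t. (- (\<i> * k)) * em t * At t + g t)"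
      unfolding FTC1 FTC2 IBP1 IBP2 using k0 by (simp add: field_simps)
    also have "\<dots> = J 0 x (\<lambda>t. 1 * ((\<i> * k) * ep t) + (1 / (2 * \<i> * k)) * ((\<i> * k) * ep t * A t + g t)
       + (C / (2 * \<i> * k)) * ((- (\<i> * k)) * em t) + (- 1 / (2 * \<i> * k)) * ((- (\<i> * k)) * em t * At t + g t))"
      by (rule J_lin4[OF l1 l2 l3 l4, symmetric])
    also have "\<dots> = J 0 x (Gfun v k m)"
      by (rule J_cong) (use k0 in \<open>simp add: Gform field_simps\<close>)
    finally show ?thesis by (simp add: diff_eq_eq add.commute)
  qed
  have eq2: "Gfun v k m x = Gfun v k m 0 + J 0 x (\<lambda>t. (complex_of_real (v t) - k\<^sup>2) * F t)" for x
  proof -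
    have "Gfun v k m x - Gfun v k m 0 = \<i> * k * (ep x - 1) + (ep x * A x - C * (em x - 1) + em x * At x) / 2"
      unfolding Gform A0 ep0 by (simp add: algebra_simps diff_divide_distrib add_divide_distrib)
    also have "\<dots> = (\<i> * k) * J 0 x (\<lambda>t. (\<i> * k) * ep t) + (1 / 2) * J 0 x (\<lambda>t. (\<i> * k) * ep t * A t + g t)
       + (- C / 2) * J 0 x (\<lambda>t. (- (\<i> * k)) * em t) + (1 / 2) * J 0 x (\<lambda>t. (- (\<i> * k)) * em t * At t + g t)"
      unfolding FTC1 FTC2 IBP1 IBP2 using k0 by (simp add: field_simps)
    also have "\<dots> = J 0 x (\<lambda>t. (\<i> * k) * ((\<i> * k) * ep t) + (1 / 2) * ((\<i> * k) * ep t * A t + g t)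
       + (- C / 2) * ((- (\<i> * k)) * em t) + (1 / 2) * ((- (\<i> * k)) * em t * At t + g t))"
      by (rule J_lin4[OF l1 l2 l3 l4, symmetric])
    also have "\<dots> = J 0 x (\<lambda>t. (complex_of_real (v t) - k\<^sup>2) * F t)"
      by (rule J_cong) (use k0 in \<open>simp add: Fform g_def field_simps power2_eq_square\<close>)
    finally show ?thesis by (simp add: diff_eq_eq add.commute)
  qed
  show ?thesis unfolding solp_def F_def[symmetric] using cF cG eq1 eq2 by blast
qed

lemma shift_Tl:
  assumes per: "\<And>t. v (t + T) = v t"
  shows "exp (- 2 * \<i> * k * complex_of_real x) * Tl x (\<lambda>t. exp (2 * \<i> * k * complex_of_real t) * (complex_of_real (v t) * m (t + T)))
       = exp (- 2 * \<i> * k * complex_of_real (x + T)) * Tl (x + T) (\<lambda>t. exp (2 * \<i> * k * complex_of_real t) * (complex_of_real (v t) * m t))"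
proof -
  have e: "exp (- 2 * \<i> * k * complex_of_real T) * exp (2 * \<i> * k * complex_of_real (t + T)) = exp (2 * \<i> * k * complex_of_real t)" for t
    by (simp add: exp_add[symmetric] algebra_simps)
  have "Tl (x + T) (\<lambda>t. exp (2 * \<i> * k * complex_of_real t) * (complex_of_real (v t) * m t))
      = Tl x (\<lambda>t. exp (2 * \<i> * k * complex_of_real (t + T)) * (complex_of_real (v (t + T)) * m (t + T)))"
    by (rule Tl_shift)
  also have "\<dots> = Tl x (\<lambda>t. exp (2 * \<i> * k * complex_of_real (t + T)) * (complex_of_real (v t) * m (t + T)))"
    by (simp only: per)
  finally have a: "Tl (x + T) (\<lambda>t. exp (2 * \<i> * k * complex_of_real t) * (complex_of_real (v t) * m t))
      = Tl x (\<lambda>t. exp (2 * \<i> * k * complex_of_real (t + T)) * (complex_of_real (v t) * m (t + T)))" .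
  have "Tl x (\<lambda>t. exp (2 * \<i> * k * complex_of_real t) * (complex_of_real (v t) * m (t + T)))
      = Tl x (\<lambda>t. exp (- 2 * \<i> * k * complex_of_real T) * (exp (2 * \<i> * k * complex_of_real (t + T)) * (complex_of_real (v t) * m (t + T))))"
  proof -
    have "(\<lambda>t. exp (2 * \<i> * k * complex_of_real t) * (complex_of_real (v t) * m (t + T)))
      = (\<lambda>t. exp (- 2 * \<i> * k * complex_of_real T) * (exp (2 * \<i> * k * complex_of_real (t + T)) * (complex_of_real (v t) * m (t + T))))"
      by (rule ext) (simp only: mult.assoc[symmetric] e)
    then show ?thesis by simp
  qed
  also have "\<dots> = exp (- 2 * \<i> * k * complex_of_real T) * Tl x (\<lambda>t. exp (2 * \<i> * k * complex_of_real (t + T)) * (complex_of_real (v t) * m (t + T)))"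
    by (rule Tl_cmult)
  finally have b: "Tl x (\<lambda>t. exp (2 * \<i> * k * complex_of_real t) * (complex_of_real (v t) * m (t + T)))
     = exp (- 2 * \<i> * k * complex_of_real T) * Tl (x + T) (\<lambda>t. exp (2 * \<i> * k * complex_of_real t) * (complex_of_real (v t) * m t))"
    using a by simp
  have c: "exp (- 2 * \<i> * k * complex_of_real x) * exp (- 2 * \<i> * k * complex_of_real T) = exp (- 2 * \<i> * k * complex_of_real (x + T))"
    by (simp add: exp_add[symmetric] algebra_simps)
  show ?thesis unfolding b using c by (simp add: mult.assoc[symmetric])
qed

lemma shift_J:
  assumes per: "\<And>t. v (t + T) = v t" and l: "loc (\<lambda>t. complex_of_real (v t) * m t)"
  shows "J 0 x (\<lambda>t. complex_of_real (v t) * m (t + T)) = J 0 (x + T) (\<lambda>t. complex_of_real (v t) * m t) - J 0 T (\<lambda>t. complex_of_real (v t) * m t)"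
proof -
  have "J (0 + T) (x + T) (\<lambda>t. complex_of_real (v t) * m t) = J 0 x (\<lambda>t. complex_of_real (v (t + T)) * m (t + T))"
    by (rule J_shift)
  then have "J T (x + T) (\<lambda>t. complex_of_real (v t) * m t) = J 0 x (\<lambda>t. complex_of_real (v t) * m (t + T))"
    by (simp only: per add_0)
  moreover have "J 0 T (\<lambda>t. complex_of_real (v t) * m t) + J T (x + T) (\<lambda>t. complex_of_real (v t) * m t) = J 0 (x + T) (\<lambda>t. complex_of_real (v t) * m t)"
    by (rule J_split[OF l])
  ultimately show ?thesis by (simp add: algebra_simps)
qed

lemma floquet_m:
  assumes p: "pot v M" and per: "\<And>t. v (t + T) = v t" and k: "Im k \<ge> 1" and q: "M / norm k < 1"
    and m: "wb B m" and mf: "\<And>x. m x = 1 + Kop v k m x"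
  defines "\<gamma> \<equiv> 1 + J 0 T (\<lambda>t. complex_of_real (v t) * m t) / (2 * \<i> * k)"
  shows "m (x + T) = \<gamma> * m x" "Ifun v k m (x + T) = \<gamma> * Ifun v k m x"
proof -
  have mc: "continuous_on UNIV m" and mb: "\<And>t. norm (m t) \<le> B * exp \<bar>t\<bar>" using m unfolding wb_def by auto
  have B0: "0 \<le> B" by (rule wb_B0[OF m])
  have l: "loc (\<lambda>t. complex_of_real (v t) * m t)" by (intro loc_mult loc_pot[OF p] loc_cont[OF mc])
  define m1 where "m1 x = m (x + T)" for x
  have cm1: "continuous_on UNIV m1" unfolding m1_def
    by (rule continuous_on_compose2[OF mc]) (auto intro!: continuous_intros)
  have wm1: "wb (B * exp \<bar>T\<bar>) m1" unfolding wb_def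
  proof (intro conjI allI cm1)
    fix t
    have "norm (m1 t) \<le> B * exp \<bar>t + T\<bar>" unfolding m1_def by (rule mb)
    also have "\<dots> \<le> B * exp (\<bar>T\<bar> + \<bar>t\<bar>)" using B0 by (intro mult_left_mono) auto
    finally show "norm (m1 t) \<le> B * exp \<bar>T\<bar> * exp \<bar>t\<bar>" by (simp add: exp_add mult.assoc)
  qed
  have Km1: "Kop v k m1 x = Kop v k m (x + T) - J 0 T (\<lambda>t. complex_of_real (v t) * m t) / (2 * \<i> * k)" for x
  proof -
    have "Kop v k m1 x = (J 0 (x + T) (\<lambda>t. complex_of_real (v t) * m t) - J 0 T (\<lambda>t. complex_of_real (v t) * m t)
      + exp (- 2 * \<i> * k * complex_of_real (x + T)) * Tl (x + T) (\<lambda>t. exp (2 * \<i> * k * complex_of_real t) * (complex_of_real (v t) * m t))) / (2 * \<i> * k)"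
      unfolding Kop_def m1_def shift_J[of v T, OF per l] shift_Tl[of v T, OF per] ..
    then show ?thesis unfolding Kop_def by (simp add: diff_divide_distrib add_divide_distrib)
  qed
  have m1f: "m1 x = \<gamma> + Kop v k m1 x" for x
    unfolding Km1 \<gamma>_def m1_def using mf[of "x + T"] by simp
  define h where "h x = m1 x - \<gamma> * m x" for x
  have wh: "wb (B * exp \<bar>T\<bar> + norm \<gamma> * B) h" unfolding wb_def
  proof (intro conjI allI)
    show "continuous_on UNIV h" unfolding h_def by (intro continuous_intros cm1 mc)
    fix t
    have "norm (h t) \<le> norm (m1 t) + norm \<gamma> * norm (m t)" unfolding h_def
      by (metis norm_mult norm_triangle_ineq4)
    also have "\<dots> \<le> B * exp \<bar>T\<bar> * exp \<bar>t\<bar> + norm \<gamma> * (B * exp \<bar>t\<bar>)"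
      using wm1 mb unfolding wb_def by (intro add_mono mult_left_mono) auto
    finally show "norm (h t) \<le> (B * exp \<bar>T\<bar> + norm \<gamma> * B) * exp \<bar>t\<bar>" by (simp add: algebra_simps)
  qed
  have hf: "h x = Kop v k h x" for x
  proof -
    have "Kop v k h x = Kop v k m1 x - \<gamma> * Kop v k m x" unfolding h_def by (rule Kop_lin[OF p k wm1 m])
    also have "\<dots> = (m1 x - \<gamma>) - \<gamma> * (m x - 1)" using m1f[of x] mf[of x] by (simp add: algebra_simps)
    also have "\<dots> = h x" unfolding h_def by (simp add: algebra_simps)
    finally show ?thesis ..
  qed
  have h0: "h x = 0" for x by (rule Kop_unique[OF p k q wh hf])
  show m1: "m (x + T) = \<gamma> * m x" using h0[of x] unfolding h_def m1_def by simp
  have "Ifun v k m (x + T) = exp (- 2 * \<i> * k * complex_of_real x) * Tl x (\<lambda>t. exp (2 * \<i> * k * complex_of_real t) * (complex_of_real (v t) * m (t + T)))"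
    unfolding Ifun_def shift_Tl[of v T, OF per] ..
  also have "\<dots> = exp (- 2 * \<i> * k * complex_of_real x) * Tl x (\<lambda>t. \<gamma> * (exp (2 * \<i> * k * complex_of_real t) * (complex_of_real (v t) * m t)))"
  proof -
    have "(\<lambda>t. exp (2 * \<i> * k * complex_of_real t) * (complex_of_real (v t) * m (t + T)))
        = (\<lambda>t. \<gamma> * (exp (2 * \<i> * k * complex_of_real t) * (complex_of_real (v t) * m t)))"
    proof
      fix t show "exp (2 * \<i> * k * complex_of_real t) * (complex_of_real (v t) * m (t + T))
        = \<gamma> * (exp (2 * \<i> * k * complex_of_real t) * (complex_of_real (v t) * m t))"
        using h0[of t] unfolding h_def m1_def by (simp add: algebra_simps)
    qed
    then show ?thesis by simp
  qed
  also have "\<dots> = \<gamma> * Ifun v k m x" unfolding Ifun_def Tl_cmult by (simp add: algebra_simps)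
  finally show "Ifun v k m (x + T) = \<gamma> * Ifun v k m x" .
qed

lemma floquet_FG:
  assumes p: "pot v M" and per: "\<And>t. v (t + T) = v t" and k: "Im k \<ge> 1" and q: "M / norm k < 1"
    and m: "wb B m" and mf: "\<And>x. m x = 1 + Kop v k m x"
  defines "\<mu> \<equiv> exp (\<i> * k * complex_of_real T) * (1 + J 0 T (\<lambda>t. complex_of_real (v t) * m t) / (2 * \<i> * k))"
  shows "Ffun k m (x + T) = \<mu> * Ffun k m x" "Gfun v k m (x + T) = \<mu> * Gfun v k m x"
proof -
  note fm = floquet_m[OF p per k q m mf]
  have e: "exp (\<i> * k * complex_of_real (x + T)) = exp (\<i> * k * complex_of_real T) * exp (\<i> * k * complex_of_real x)"
    by (simp add: exp_add[symmetric] algebra_simps)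
  show "Ffun k m (x + T) = \<mu> * Ffun k m x" unfolding Ffun_def e fm(1) \<mu>_def by (simp add: algebra_simps)
  show "Gfun v k m (x + T) = \<mu> * Gfun v k m x" unfolding Gfun_def e fm(1) fm(2) \<mu>_def by (simp add: algebra_simps)
qed

lemma unit_root:
  fixes t :: complex and d :: real
  assumes eq: "t\<^sup>2 - complex_of_real d * t + 1 = 0" and d: "\<bar>d\<bar> \<le> 2"
  shows "norm t = 1"
proof -
  define a where "a = Re t"
  define b where "b = Im t"
  have re: "a * a - b * b - d * a + 1 = 0"
    using arg_cong[OF eq, of Re] unfolding a_def b_def by (simp add: power2_eq_square)
  have im: "2 * a * b - d * b = 0"
    using arg_cong[OF eq, of Im] unfolding a_def b_def by (simp add: power2_eq_square)
  have n2: "(norm t)\<^sup>2 = a * a + b * b" unfolding a_def b_def cmod_power2 by (simp add: power2_eq_square)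
  have "a * a + b * b = 1"
  proof (cases "b = 0")
    case True
    then have e: "a * a + 1 = d * a" using re by simp
    have "d * a \<le> 2 * \<bar>a\<bar>"
    proof -
      have "d * a \<le> \<bar>d\<bar> * \<bar>a\<bar>" by (metis abs_ge_self abs_mult)
      also have "\<dots> \<le> 2 * \<bar>a\<bar>" using d by (intro mult_right_mono) auto
      finally show ?thesis .
    qed
    then have "(\<bar>a\<bar> - 1) * (\<bar>a\<bar> - 1) \<le> 0" using e by (simp add: algebra_simps abs_mult_self_eq)
    then have "(\<bar>a\<bar> - 1) * (\<bar>a\<bar> - 1) = 0" using zero_le_square[of "\<bar>a\<bar> - 1"] by linarith
    then have "\<bar>a\<bar> = 1" by simp
    then have "a * a = 1" by (metis abs_mult_self_eq mult_1_right)
    then show ?thesis using True by simp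
  next
    case False
    then have "2 * a = d" using im by (simp add: algebra_simps)
    then have "d * a = 2 * (a * a)" by (simp add: algebra_simps)
    then show ?thesis using re by linarith
  qed
  then have "(norm t)\<^sup>2 = 1" using n2 by simp
  then have "norm t = 1 \<or> norm t = -1" by (simp add: power2_eq_1_iff)
  then show ?thesis using norm_ge_zero[of t] by linarith
qed

lemma quad_roots:
  fixes \<rho> \<mu> D :: complex
  assumes "\<rho>\<^sup>2 - D * \<rho> + 1 = 0" "\<mu>\<^sup>2 - D * \<mu> + 1 = 0" "\<rho> \<noteq> \<mu>"
  shows "\<rho> * \<mu> = 1"
proof -
  have r1: "\<rho> * \<rho> = D * \<rho> - 1" "\<mu> * \<mu> = D * \<mu> - 1" using assms(1,2) by (simp_all add: algebra_simps power2_eq_square)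
  have "(\<rho> - \<mu>) * (\<rho> + \<mu> - D) = \<rho> * \<rho> - \<mu> * \<mu> - D * \<rho> + D * \<mu>" by (simp add: algebra_simps)
  also have "\<dots> = 0" unfolding r1 by simp
  finally have "(\<rho> - \<mu>) * (\<rho> + \<mu> - D) = 0" .
  then have "\<rho> + \<mu> = D" using assms(3) by simp
  have "\<rho> * \<mu> = (\<rho> + \<mu>) * \<rho> - \<rho> * \<rho>" by (simp add: algebra_simps)
  also have "\<dots> = D * \<rho> - \<rho> * \<rho>" using \<open>\<rho> + \<mu> = D\<close> by simp
  also have "\<dots> = 1" using r1(1) by simp
  finally show ?thesis .
qed

lemma eig_char:
  fixes a b c d \<alpha> \<beta> \<mu> :: complex
  assumes "\<alpha> * a + \<beta> * b = \<mu> * \<alpha>" "\<alpha> * c + \<beta> * d = \<mu> * \<beta>" "\<alpha> \<noteq> 0" "a * d - c * b = 1"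
  shows "\<mu>\<^sup>2 - (a + d) * \<mu> + 1 = 0"
proof -
  have "\<alpha> * ((a - \<mu>) * (d - \<mu>) - b * c) = (d - \<mu>) * (\<alpha> * a + \<beta> * b - \<mu> * \<alpha>) - b * (\<alpha> * c + \<beta> * d - \<mu> * \<beta>)"
    by (simp add: algebra_simps)
  also have "\<dots> = 0" using assms(1,2) by simp
  finally have "(a - \<mu>) * (d - \<mu>) - b * c = 0" using assms(3) by simp
  then show ?thesis using assms(4) by (simp add: algebra_simps power2_eq_square)
qed

lemma monodromy:
  fixes a b c d \<alpha> \<beta> \<alpha>' \<beta>' \<mu> \<nu> \<rho> :: complex
  assumes W: "a * d - c * b = 1"
    and e1: "\<alpha> * a + \<beta> * b = \<mu> * \<alpha>" "\<alpha> * c + \<beta> * d = \<mu> * \<beta>" "\<alpha> \<noteq> 0"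
    and e2: "\<alpha>' * a + \<beta>' * b = \<nu> * \<alpha>'" "\<alpha>' * c + \<beta>' * d = \<nu> * \<beta>'" "\<alpha>' \<noteq> 0"
    and mn: "norm \<mu> < 1" "norm \<nu> > 1"
    and r: "\<rho>\<^sup>2 - (a + d) * \<rho> + 1 = 0" "norm \<rho> < 1"
  shows "\<rho> = \<mu>" "inverse \<rho> = \<nu>" "b \<noteq> 0" "(\<rho> - a) / b = \<beta> / \<alpha>" "(inverse \<rho> - a) / b = \<beta>' / \<alpha>'"
proof -
  have cm: "\<mu>\<^sup>2 - (a + d) * \<mu> + 1 = 0" by (rule eig_char[OF e1 W])
  have cn: "\<nu>\<^sup>2 - (a + d) * \<nu> + 1 = 0" by (rule eig_char[OF e2 W])
  show rm: "\<rho> = \<mu>"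
  proof (rule ccontr)
    assume "\<rho> \<noteq> \<mu>"
    then have "\<rho> * \<mu> = 1" by (rule quad_roots[OF r(1) cm])
    then have "norm \<rho> * norm \<mu> = 1" by (metis norm_mult norm_one)
    moreover have "norm \<rho> * norm \<mu> < 1 * 1" using r(2) mn(1) by (intro mult_strict_mono') auto
    ultimately show False by simp
  qed
  have "\<nu> \<noteq> \<mu>" using mn by auto
  then have "\<nu> * \<mu> = 1" by (rule quad_roots[OF cn cm])
  then show ri: "inverse \<rho> = \<nu>" using rm by (simp add: inverse_unique mult.commute)
  show b0: "b \<noteq> 0"
  proof
    assume "b = 0"
    then have "\<mu> = a" "\<nu> = a" using e1(1,3) e2(1,3) by (simp_all add: mult.commute)
    then show False using \<open>\<nu> \<noteq> \<mu>\<close> by simp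
  qed
  show "(\<rho> - a) / b = \<beta> / \<alpha>" using e1(1) e1(3) b0 rm by (simp add: field_simps)
  show "(inverse \<rho> - a) / b = \<beta>' / \<alpha>'" using e2(1) e2(3) b0 ri by (simp add: field_simps)
qed

lemma est_basic:
  assumes p: "pot v M" and k: "Im k \<ge> 1" and q: "M / norm k \<le> 1/4" and m: "wb 2 m"
    and mf: "\<And>x. m x = 1 + Kop v k m x"
  shows "norm (m y - 1) \<le> 2 * M / norm k * exp \<bar>y\<bar>"
    and "norm (m y - 1 - J 0 y (\<lambda>t. complex_of_real (v t)) / (2 * \<i> * k))
           \<le> (M * M / (norm k)\<^sup>2 + M / ((2 * Im k - 1) * norm k)) * exp \<bar>y\<bar>"
    and "norm (m 0) \<ge> 1/2"
    and "norm (Ifun v k m y) \<le> 2 * M * exp \<bar>y\<bar>"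
    and "norm (J 0 y (\<lambda>t. complex_of_real (v t))) \<le> M * \<bar>y\<bar>"
proof -
  have mc: "continuous_on UNIV m" and mb: "\<And>t. norm (m t) \<le> 2 * exp \<bar>t\<bar>" using m unfolding wb_def by auto
  have mm: "m \<in> borel_measurable borel" by (rule borel_measurable_continuous_onI[OF mc])
  have k0: "norm k > 0" using k by (auto simp: zero_less_norm_iff)
  have k1: "norm k \<ge> 1" using k abs_Im_le_cmod[of k] by linarith
  have M0: "0 \<le> M" by (rule pot_M[OF p])
  have m1: "norm (m t - 1) \<le> 2 * M / norm k * exp \<bar>t\<bar>" for t
  proof -
    have "norm (m t - 1) = norm (Kop v k m t)" using mf[of t] by simp
    also have "\<dots> \<le> M / norm k * 2 * exp \<bar>t\<bar>" by (rule Kop_bound[OF p k m])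
    finally show ?thesis by (simp add: mult_ac)
  qed
  then show "norm (m y - 1) \<le> 2 * M / norm k * exp \<bar>y\<bar>" .
  have "norm (m 0 - 1) \<le> 2 * M / norm k" using m1[of 0] by simp
  also have "\<dots> \<le> 1/2" using q by (simp add: mult_ac)
  finally have "norm (m 0 - 1) \<le> 1/2" .
  then show "norm (m 0) \<ge> 1/2" using norm_triangle_ineq2[of 1 "m 0"] by (simp add: norm_minus_commute)
  have ti: "norm (Ifun v k m y) \<le> M * 2 * exp \<bar>y\<bar> / (2 * Im k - 1)"
    unfolding Ifun_def by (rule tail_est(2)[OF p _ mm mb]) (use k in auto)
  have "M * 2 * exp \<bar>y\<bar> / (2 * Im k - 1) \<le> M * 2 * exp \<bar>y\<bar> / 1"
    using k M0 by (intro divide_left_mono) auto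
  with ti show "norm (Ifun v k m y) \<le> 2 * M * exp \<bar>y\<bar>" by simp
  have lv: "loc (\<lambda>t. complex_of_real (v t))" by (rule loc_pot[OF p])
  show Ub: "norm (J 0 y (\<lambda>t. complex_of_real (v t))) \<le> M * \<bar>y\<bar>"
  proof -
    have "norm (J 0 y (\<lambda>t. complex_of_real (v t))) \<le> M * \<bar>y - 0\<bar>"
      by (rule J_bound[OF lv]) (use pot_v[OF p] in auto)
    then show ?thesis by simp
  qed
  have wm1: "wb (2 * M / norm k) (\<lambda>t. m t - 1)" unfolding wb_def using m1 mc by (auto intro: continuous_intros)
  have lvm: "loc (\<lambda>t. complex_of_real (v t) * m t)" by (intro loc_mult lv loc_cont[OF mc])
  have "J 0 y (\<lambda>t. complex_of_real (v t) * m t) - J 0 y (\<lambda>t. complex_of_real (v t))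
      = J 0 y (\<lambda>t. complex_of_real (v t) * m t - complex_of_real (v t))" by (rule J_diff[OF lvm lv, symmetric])
  also have "\<dots> = J 0 y (\<lambda>t. complex_of_real (v t) * (m t - 1))" by (simp add: algebra_simps)
  finally have Jd: "J 0 y (\<lambda>t. complex_of_real (v t) * m t) - J 0 y (\<lambda>t. complex_of_real (v t))
      = J 0 y (\<lambda>t. complex_of_real (v t) * (m t - 1))" .
  have b1: "norm (J 0 y (\<lambda>t. complex_of_real (v t) * (m t - 1))) \<le> M * (2 * M / norm k) * exp \<bar>y\<bar>"
    by (rule J_vm_bound[OF p wm1])
  have n2k: "norm (2 * \<i> * k) = 2 * norm k" by (simp add: norm_mult)
  have b2: "norm (Ifun v k m y) \<le> M * 2 * exp \<bar>y\<bar> / (2 * Im k - 1)" by (rule ti)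
  have "m y - 1 - J 0 y (\<lambda>t. complex_of_real (v t)) / (2 * \<i> * k)
      = (J 0 y (\<lambda>t. complex_of_real (v t) * (m t - 1)) + Ifun v k m y) / (2 * \<i> * k)"
    using mf[of y] Jd unfolding Kop_def Ifun_def by (simp add: diff_divide_distrib add_divide_distrib algebra_simps)
  also have "norm \<dots> \<le> (M * (2 * M / norm k) * exp \<bar>y\<bar> + M * 2 * exp \<bar>y\<bar> / (2 * Im k - 1)) / (2 * norm k)"
    unfolding norm_divide n2k using k0 b1 b2
    by (intro divide_right_mono order_trans[OF norm_triangle_ineq add_mono]) auto
  also have "\<dots> = (M * M / (norm k)\<^sup>2 + M / ((2 * Im k - 1) * norm k)) * exp \<bar>y\<bar>"
    using k0 k by (simp add: field_simps power2_eq_square)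
  finally show "norm (m y - 1 - J 0 y (\<lambda>t. complex_of_real (v t)) / (2 * \<i> * k))
           \<le> (M * M / (norm k)\<^sup>2 + M / ((2 * Im k - 1) * norm k)) * exp \<bar>y\<bar>" .
qed

lemma est_F:
  assumes p: "pot v M" and k: "Im k \<ge> 1" and q: "M / norm k \<le> 1/4" and m: "wb 2 m"
    and mf: "\<And>x. m x = 1 + Kop v k m x"
  shows "norm (Ffun k m y / m 0 - exp (\<i> * k * complex_of_real y) * (1 + J 0 y (\<lambda>t. complex_of_real (v t)) / (2 * \<i> * k)))
     \<le> norm (exp (\<i> * k * complex_of_real y)) *
        (2 * (M * M / (norm k)\<^sup>2 + M / ((2 * Im k - 1) * norm k)) * (exp \<bar>y\<bar> + 1 + M * \<bar>y\<bar>))"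
proof -
  note e = est_basic[OF p k q m mf]
  define \<delta> where "\<delta> = M * M / (norm k)\<^sup>2 + M / ((2 * Im k - 1) * norm k)"
  have k0: "norm k > 0" using k by (auto simp: zero_less_norm_iff)
  have k1: "norm k \<ge> 1" using k abs_Im_le_cmod[of k] by linarith
  have M0: "0 \<le> M" by (rule pot_M[OF p])
  have "0 < (2 * Im k - 1) * norm k" using k k0 by (intro mult_pos_pos) auto
  then have d0: "0 \<le> \<delta>" unfolding \<delta>_def using M0 by (intro add_nonneg_nonneg divide_nonneg_pos) auto
  define a where "a = m y"
  define b where "b = m 0"
  define w where "w = J 0 y (\<lambda>t. complex_of_real (v t)) / (2 * \<i> * k)"
  have b0: "norm b \<ge> 1/2" unfolding b_def by (rule e(3))
  then have bn0: "b \<noteq> 0" by auto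
  have ea: "norm (a - 1 - w) \<le> \<delta> * exp \<bar>y\<bar>" unfolding a_def w_def \<delta>_def by (rule e(2))
  have eb: "norm (b - 1) \<le> \<delta>" using e(2)[of 0] unfolding b_def \<delta>_def by simp
  have wn: "norm w \<le> M * \<bar>y\<bar>"
  proof -
    have "norm w = norm (J 0 y (\<lambda>t. complex_of_real (v t))) / (2 * norm k)" unfolding w_def by (simp add: norm_divide norm_mult)
    also have "\<dots> \<le> M * \<bar>y\<bar> / (2 * norm k)" using e(5) k0 by (intro divide_right_mono) auto
    also have "\<dots> \<le> M * \<bar>y\<bar> / 1" using k1 M0 by (intro divide_left_mono) auto
    finally show ?thesis by simp
  qed
  have "a / b - 1 - w = ((a - 1 - w) - (b - 1) * (1 + w)) / b" using bn0 by (simp add: field_simps)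
  also have "norm \<dots> \<le> (\<delta> * exp \<bar>y\<bar> + \<delta> * (1 + M * \<bar>y\<bar>)) / (1/2)"
  proof -
    have "norm ((a - 1 - w) - (b - 1) * (1 + w)) \<le> \<delta> * exp \<bar>y\<bar> + \<delta> * (1 + M * \<bar>y\<bar>)"
    proof (rule order_trans[OF norm_triangle_ineq4 add_mono[OF ea]])
      have "norm (1 + w) \<le> 1 + M * \<bar>y\<bar>" using wn norm_triangle_ineq[of 1 w] by simp
      then show "norm ((b - 1) * (1 + w)) \<le> \<delta> * (1 + M * \<bar>y\<bar>)" by (rule prod_bound[OF eb])
    qed
    then show ?thesis unfolding norm_divide using b0 d0 M0
      by (intro frac_le) (auto intro!: add_nonneg_nonneg mult_nonneg_nonneg)
  qed
  finally have r: "norm (a / b - 1 - w) \<le> 2 * \<delta> * (exp \<bar>y\<bar> + 1 + M * \<bar>y\<bar>)" by (simp add: algebra_simps)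
  have "Ffun k m y / m 0 - exp (\<i> * k * complex_of_real y) * (1 + w) = exp (\<i> * k * complex_of_real y) * (a / b - 1 - w)"
    unfolding Ffun_def a_def b_def by (simp add: algebra_simps)
  then show ?thesis unfolding w_def[symmetric] \<delta>_def[symmetric] using r
    by (simp add: norm_mult mult_left_mono)
qed

lemma est_G:
  assumes p: "pot v M" and k: "Im k \<ge> 1" and q: "M / norm k \<le> 1/4" and m: "wb 2 m"
    and mf: "\<And>x. m x = 1 + Kop v k m x"
  shows "norm (Gfun v k m y / m 0 - exp (\<i> * k * complex_of_real y) * (\<i> * k))
     \<le> norm (exp (\<i> * k * complex_of_real y)) * (8 * M * (exp \<bar>y\<bar> + 1))"
proof -
  note e = est_basic[OF p k q m mf]
  have k0: "norm k > 0" using k by (auto simp: zero_less_norm_iff)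
  have M0: "0 \<le> M" by (rule pot_M[OF p])
  define a where "a = m y"
  define b where "b = m 0"
  have b0: "norm b \<ge> 1/2" unfolding b_def by (rule e(3))
  then have bn0: "b \<noteq> 0" by auto
  have ab: "norm (a - b) \<le> 2 * M / norm k * (exp \<bar>y\<bar> + 1)"
  proof -
    have "norm (a - b) \<le> norm (a - 1) + norm (b - 1)" using norm_triangle_ineq4[of "a - 1" "b - 1"] by simp
    also have "\<dots> \<le> 2 * M / norm k * exp \<bar>y\<bar> + 2 * M / norm k * exp \<bar>0\<bar>"
      unfolding a_def b_def by (intro add_mono e(1))
    finally show ?thesis by (simp add: add_divide_distrib algebra_simps)
  qed
  have "norm (\<i> * k * (a - b)) \<le> 2 * M * (exp \<bar>y\<bar> + 1)"
  proof -
    have "norm (\<i> * k * (a - b)) = norm k * norm (a - b)" by (simp add: norm_mult)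
    also have "\<dots> \<le> norm k * (2 * M / norm k * (exp \<bar>y\<bar> + 1))" by (intro mult_left_mono ab) auto
    also have "\<dots> = 2 * M * (exp \<bar>y\<bar> + 1)" using k0 by simp
    finally show ?thesis .
  qed
  then have "norm (\<i> * k * (a - b) - Ifun v k m y) \<le> 2 * M * (exp \<bar>y\<bar> + 1) + 2 * M * exp \<bar>y\<bar>"
    using e(4) by (intro order_trans[OF norm_triangle_ineq4 add_mono]) auto
  also have "\<dots> \<le> 4 * M * (exp \<bar>y\<bar> + 1)" using M0 by (simp add: algebra_simps)
  finally have n1: "norm (\<i> * k * (a - b) - Ifun v k m y) \<le> 4 * M * (exp \<bar>y\<bar> + 1)" .
  have "norm ((\<i> * k * (a - b) - Ifun v k m y) / b) \<le> (4 * M * (exp \<bar>y\<bar> + 1)) / (1/2)"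
    unfolding norm_divide using b0 n1 M0 by (intro frac_le) auto
  then have r: "norm ((\<i> * k * (a - b) - Ifun v k m y) / b) \<le> 8 * M * (exp \<bar>y\<bar> + 1)" by simp
  have eq: "Gfun v k m y / m 0 - exp (\<i> * k * complex_of_real y) * (\<i> * k)
     = exp (\<i> * k * complex_of_real y) * ((\<i> * k * (a - b) - Ifun v k m y) / b)"
    unfolding Gfun_def a_def b_def using bn0[unfolded b_def] by (simp add: field_simps)
  have "norm (Gfun v k m y / m 0 - exp (\<i> * k * complex_of_real y) * (\<i> * k))
      = norm (exp (\<i> * k * complex_of_real y)) * norm ((\<i> * k * (a - b) - Ifun v k m y) / b)"
    unfolding eq by (rule norm_mult)
  also have "\<dots> \<le> norm (exp (\<i> * k * complex_of_real y)) * (8 * M * (exp \<bar>y\<bar> + 1))"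
    by (rule mult_left_mono[OF r norm_ge_zero])
  finally show ?thesis .
qed

lemma pot_reflect: "pot u M \<Longrightarrow> pot (\<lambda>t. u (- t)) M"
proof -
  assume a: "pot u M"
  then have [measurable]: "u \<in> borel_measurable borel" unfolding pot_def by auto
  have "(\<lambda>t. u (- t)) \<in> borel_measurable borel" by measurable
  then show ?thesis using a unfolding pot_def by auto
qed

lemma mu_bound:
  assumes p: "pot v M" and k: "Im k \<ge> 1" and q: "M / norm k \<le> 1/4" and m: "wb 2 m"
    and T: "T > 0" and kT: "exp (Im k * T) > 1 + exp T"
  shows "norm (exp (\<i> * k * complex_of_real T) * (1 + J 0 T (\<lambda>t. complex_of_real (v t) * m t) / (2 * \<i> * k))) < 1"
proof -
  have k0: "norm k > 0" using k by (auto simp: zero_less_norm_iff)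
  have M0: "0 \<le> M" by (rule pot_M[OF p])
  have jb: "norm (J 0 T (\<lambda>t. complex_of_real (v t) * m t)) \<le> M * 2 * exp \<bar>T\<bar>" by (rule J_vm_bound[OF p m])
  have "norm (J 0 T (\<lambda>t. complex_of_real (v t) * m t) / (2 * \<i> * k)) = norm (J 0 T (\<lambda>t. complex_of_real (v t) * m t)) / (2 * norm k)"
    by (simp add: norm_divide norm_mult)
  also have "\<dots> \<le> M * 2 * exp \<bar>T\<bar> / (2 * norm k)" using jb k0 by (intro divide_right_mono) auto
  also have "\<dots> = M * 2 * exp T / (2 * norm k)" using T by simp
  finally have "norm (J 0 T (\<lambda>t. complex_of_real (v t) * m t) / (2 * \<i> * k)) \<le> M * 2 * exp T / (2 * norm k)" .
  also have "\<dots> = (M / norm k) * exp T" by simp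
  also have "\<dots> \<le> 1/4 * exp T" using q by (intro mult_right_mono) auto
  finally have "norm (1 + J 0 T (\<lambda>t. complex_of_real (v t) * m t) / (2 * \<i> * k)) \<le> 1 + 1/4 * exp T"
    using norm_triangle_ineq[of 1 "J 0 T (\<lambda>t. complex_of_real (v t) * m t) / (2 * \<i> * k)"] by simp
  then have "norm (exp (\<i> * k * complex_of_real T) * (1 + J 0 T (\<lambda>t. complex_of_real (v t) * m t) / (2 * \<i> * k)))
      \<le> exp (- (Im k * T)) * (1 + 1/4 * exp T)"
    by (simp add: norm_mult norm_exp_eq_Re mult_left_mono)
  also have "\<dots> < 1"
  proof -
    have "1 + 1/4 * exp T < exp (Im k * T)" using kT exp_gt_zero[of T] by linarith
    then show ?thesis by (simp add: exp_minus field_simps)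
  qed
  finally show ?thesis .
qed

lemma good_k:
  fixes y1 y1' y2 y2' :: "real \<Rightarrow> complex" and \<rho> :: complex
  assumes p: "pot u M" and per: "\<And>t. u (t + T) = u t" and T: "T > 0"
    and s1: "solp u l y1 y1'" "y1 0 = 1" "y1' 0 = 0"
    and s2: "solp u l y2 y2'" "y2 0 = 0" "y2' 0 = 1"
    and l: "l = k\<^sup>2" and k: "Im k \<ge> 1" and q: "M / norm k \<le> 1/4" and kT: "exp (Im k * T) > 1 + exp T"
    and rr: "(\<forall>r. l = complex_of_real r \<longrightarrow> y1 T + y2' T \<notin> complex_of_real ` {-2..2}) \<Longrightarrow>
             \<rho>\<^sup>2 - (y1 T + y2' T) * \<rho> + 1 = 0 \<and> norm \<rho> < 1"
  shows "\<exists>m mr. wb 2 m \<and> (\<forall>x. m x = 1 + Kop u k m x) \<and> wb 2 mr \<and> (\<forall>x. mr x = 1 + Kop (\<lambda>t. u (- t)) k mr x) \<and>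
     (\<forall>x. y1 x + (\<rho> - y1 T) / y2 T * y2 x = Ffun k m x / m 0) \<and>
     (\<forall>x. y1' x + (\<rho> - y1 T) / y2 T * y2' x = Gfun u k m x / m 0) \<and>
     (\<forall>x. y1 x + (inverse \<rho> - y1 T) / y2 T * y2 x = Ffun k mr (- x) / mr 0) \<and>
     (\<forall>x. y1' x + (inverse \<rho> - y1 T) / y2 T * y2' x = - Gfun (\<lambda>t. u (- t)) k mr (- x) / mr 0)"
proof -
  define ur where "ur t = u (- t)" for t
  have pr: "pot ur M" unfolding ur_def by (rule pot_reflect[OF p])
  have perr: "ur (t + T) = ur t" for t
  proof -
    show ?thesis unfolding ur_def using per[of "- t - T"] by simp
  qed
  have q2: "M / norm k \<le> 1/2" "M / norm k < 1" using q by linarith+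
  obtain m where m: "wb 2 m" and mf: "\<And>x. m x = 1 + Kop u k m x" using Kop_exists[OF p k q2(1)] by blast
  obtain mr where mr: "wb 2 mr" and mrf: "\<And>x. mr x = 1 + Kop ur k mr x" using Kop_exists[OF pr k q2(1)] by blast
  have m0: "norm (m 0) \<ge> 1/2" by (rule est_basic(3)[OF p k q m mf])
  have mr0: "norm (mr 0) \<ge> 1/2" by (rule est_basic(3)[OF pr k q mr mrf])
  have mn0: "m 0 \<noteq> 0" "mr 0 \<noteq> 0" using m0 mr0 by auto
  define F where "F = Ffun k m"
  define G where "G = Gfun u k m"
  define Fr where "Fr = Ffun k mr"
  define Gr where "Gr = Gfun ur k mr"
  have sF: "solp u l F G" unfolding F_def G_def l by (rule sol_F[OF p k m mf])
  have sFr0: "solp ur l Fr Gr" unfolding Fr_def Gr_def l by (rule sol_F[OF pr k mr mrf])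
  have sFr: "solp u l (\<lambda>x. Fr (- x)) (\<lambda>x. - Gr (- x))"
  proof -
    have urf: "ur = (\<lambda>t. u (- t))" by (rule ext) (simp add: ur_def)
    show ?thesis by (rule solp_reflect) (use sFr0 in \<open>simp add: urf\<close>)
  qed
  have F0: "F 0 = m 0" unfolding F_def Ffun_def by simp
  have Fr0: "Fr 0 = mr 0" unfolding Fr_def Ffun_def by simp
  note rep = represent[OF p s1 s2 sF]
  note repr = represent[OF p s1 s2 sFr]
  define \<mu> where "\<mu> = exp (\<i> * k * complex_of_real T) * (1 + J 0 T (\<lambda>t. complex_of_real (u t) * m t) / (2 * \<i> * k))"
  define \<mu>r where "\<mu>r = exp (\<i> * k * complex_of_real T) * (1 + J 0 T (\<lambda>t. complex_of_real (ur t) * mr t) / (2 * \<i> * k))"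
  have fl: "F (x + T) = \<mu> * F x" "G (x + T) = \<mu> * G x" for x
    unfolding F_def G_def \<mu>_def by (rule floquet_FG[OF p per k q2(2) m mf])+
  have flr: "Fr (x + T) = \<mu>r * Fr x" "Gr (x + T) = \<mu>r * Gr x" for x
    unfolding Fr_def Gr_def \<mu>r_def by (rule floquet_FG[OF pr perr k q2(2) mr mrf])+
  have mu1: "norm \<mu> < 1" unfolding \<mu>_def by (rule mu_bound[OF p k q m T kT])
  have mur1: "norm \<mu>r < 1" unfolding \<mu>r_def by (rule mu_bound[OF pr k q mr T kT])
  have "Fr 0 = \<mu>r * Fr (- T)" using flr(1)[of "- T"] by simp
  then have mur0: "\<mu>r \<noteq> 0" using mn0 Fr0 by auto
  define \<nu> where "\<nu> = inverse \<mu>r"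
  have nu1: "norm \<nu> > 1" unfolding \<nu>_def using mur1 mur0 by (simp add: norm_inverse one_less_inverse)
  have FrT: "Fr (- T) = \<nu> * Fr 0" "Gr (- T) = \<nu> * Gr 0"
    using flr(1)[of "- T"] flr(2)[of "- T"] mur0 unfolding \<nu>_def by (simp_all add: field_simps)
  have W: "y1 T * y2' T - y1' T * y2 T = 1" using wronski[OF p s1(1) s2(1), of T] s1 s2 by simp
  have e1: "F 0 * y1 T + G 0 * y2 T = \<mu> * F 0" "F 0 * y1' T + G 0 * y2' T = \<mu> * G 0"
    using rep[of T] fl[of 0] by simp_all
  have e2: "Fr 0 * y1 T + (- Gr 0) * y2 T = \<nu> * Fr 0" "Fr 0 * y1' T + (- Gr 0) * y2' T = \<nu> * (- Gr 0)"
    using repr(1)[of T] repr(2)[of T] FrT by simp_all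
  have a0: "F 0 \<noteq> 0" "Fr 0 \<noteq> 0" using mn0 F0 Fr0 by auto
  have nspec: "\<forall>r. l = complex_of_real r \<longrightarrow> y1 T + y2' T \<notin> complex_of_real ` {-2..2}"
  proof (intro allI impI notI)
    fix r assume "l = complex_of_real r" "y1 T + y2' T \<in> complex_of_real ` {-2..2}"
    then obtain d where d: "y1 T + y2' T = complex_of_real d" "\<bar>d\<bar> \<le> 2" by auto
    have "\<mu>\<^sup>2 - (y1 T + y2' T) * \<mu> + 1 = 0" by (rule eig_char[OF e1 a0(1) W])
    then have "norm \<mu> = 1" using unit_root[of \<mu> d] d by simp
    then show False using mu1 by simp
  qed
  have rho: "\<rho>\<^sup>2 - (y1 T + y2' T) * \<rho> + 1 = 0" "norm \<rho> < 1" using rr[OF nspec] by auto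
  note mono = monodromy[OF W e1 a0(1) e2 a0(2) mu1 nu1 rho]
  have P1: "y1 x + (\<rho> - y1 T) / y2 T * y2 x = F x / m 0" for x
    unfolding mono(4) using rep(1)[of x] a0 F0 by (simp add: field_simps)
  have P2: "y1' x + (\<rho> - y1 T) / y2 T * y2' x = G x / m 0" for x
    unfolding mono(4) using rep(2)[of x] a0 F0 by (simp add: field_simps)
  have P3: "y1 x + (inverse \<rho> - y1 T) / y2 T * y2 x = Fr (- x) / mr 0" for x
    unfolding mono(5) using repr(1)[of x] a0 Fr0 by (simp add: field_simps)
  have P4: "y1' x + (inverse \<rho> - y1 T) / y2 T * y2' x = - Gr (- x) / mr 0" for x
    unfolding mono(5) using repr(2)[of x] a0 Fr0 by (simp add: field_simps)
  show ?thesis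
    using m mf mr mrf P1 P2 P3 P4 unfolding F_def G_def Fr_def Gr_def ur_def by blast
qed

lemma sqrt_cut_sq: "(sqrt_cut z)\<^sup>2 = z"
  unfolding sqrt_cut_def by (cases "0 \<le> Im z") simp_all

lemma sqrt_cut_norm: "norm (sqrt_cut z) = sqrt (norm z)"
  unfolding sqrt_cut_def by simp

lemma sqrt_cut_Im: "Im (sqrt_cut z) = sqrt ((norm z - Re z) / 2)"
proof (cases "Im z = 0")
  case True then show ?thesis unfolding sqrt_cut_def by simp
next
  case False
  then show ?thesis unfolding sqrt_cut_def by (cases "Im z > 0") (auto simp: sgn_if)
qed

lemma Omega_prop:
  assumes z: "z \<in> Omega s" and s: "s > 0"
  shows "s < pi" "Re z \<le> norm z * cos s"
proof -
  define \<theta> where "\<theta> = arg2pi z"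
  have th: "s < \<theta>" "\<theta> < 2 * pi - s" using z unfolding Omega_def \<theta>_def by auto
  show sp: "s < pi" using th by linarith
  have ab: "- pi < Arg z" "Arg z \<le> pi" using Arg_bounded[of z] by auto
  have ct: "cos \<theta> = cos (Arg z)" unfolding \<theta>_def arg2pi_def by simp
  have t0: "0 \<le> \<theta>" unfolding \<theta>_def arg2pi_def using ab by auto
  have Rez: "Re z = norm z * cos (Arg z)" using arg_cong[OF rcis_cmod_Arg[of z], of Re] by simp
  have "cos \<theta> \<le> cos s"
  proof (cases "\<theta> \<le> pi")
    case True
    then show ?thesis using cos_mono_le_eq[of \<theta> s] th t0 s sp by auto
  next
    case False
    have "cos \<theta> = cos (2 * pi - \<theta>)" by simp
    also have "\<dots> \<le> cos s" using cos_mono_le_eq[of "2 * pi - \<theta>" s] th False s sp by auto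
    finally show ?thesis .
  qed
  then show "Re z \<le> norm z * cos s" unfolding Rez ct[symmetric] by (intro mult_left_mono) auto
qed

lemma delta_bound:
  assumes c: "c > 0" "Im k \<ge> c * norm k" and k: "Im k \<ge> 1" and M0: "0 \<le> M"
  shows "M * M / (norm k)\<^sup>2 + M / ((2 * Im k - 1) * norm k) \<le> (M * M + M / c) / (norm k)\<^sup>2"
proof -
  have k0: "norm k > 0" using k by (auto simp: zero_less_norm_iff)
  have "c * norm k * norm k \<le> (2 * Im k - 1) * norm k" using c k k0 by (intro mult_right_mono) auto
  moreover have "0 < c * norm k * norm k" using c k0 by simp
  ultimately have "M / ((2 * Im k - 1) * norm k) \<le> M / (c * norm k * norm k)"
    using M0 by (intro divide_left_mono) auto
  also have "\<dots> = (M / c) / (norm k)\<^sup>2" by (simp add: power2_eq_square)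
  finally show ?thesis by (simp add: add_divide_distrib)
qed

lemma at_l:
  fixes y1 y1' y2 y2' :: "real \<Rightarrow> complex" and \<rho> :: complex
  assumes p: "pot u M" and per: "\<And>t. u (t + T) = u t" and T: "T > 0"
    and s1: "solp u l y1 y1'" "y1 0 = 1" "y1' 0 = 0"
    and s2: "solp u l y2 y2'" "y2 0 = 0" "y2' 0 = 1"
    and rr: "(\<forall>r. l = complex_of_real r \<longrightarrow> y1 T + y2' T \<notin> complex_of_real ` {-2..2}) \<Longrightarrow>
             \<rho>\<^sup>2 - (y1 T + y2' T) * \<rho> + 1 = 0 \<and> norm \<rho> < 1"
    and kd: "k = sqrt_cut l" and c: "c > 0" "Im k \<ge> c * norm k" and k: "Im k \<ge> 1"
    and q: "M / norm k \<le> 1/4" and kT: "exp (Im k * T) > 1 + exp T"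
  shows "norm (y1 x + (\<rho> - y1 T) / y2 T * y2 x - exp (\<i> * k * complex_of_real x) * (1 + J 0 x (\<lambda>t. complex_of_real (u t)) / (2 * \<i> * k)))
          \<le> (2 * (M * M + M / c) * (exp \<bar>x\<bar> + 1 + M * \<bar>x\<bar>)) * norm (exp (\<i> * k * complex_of_real x) / l)"
    and "norm (y1 x + (inverse \<rho> - y1 T) / y2 T * y2 x - exp (- \<i> * k * complex_of_real x) * (1 - J 0 x (\<lambda>t. complex_of_real (u t)) / (2 * \<i> * k)))
          \<le> (2 * (M * M + M / c) * (exp \<bar>x\<bar> + 1 + M * \<bar>x\<bar>)) * norm (exp (- \<i> * k * complex_of_real x) / l)"
    and "norm (y1' x + (\<rho> - y1 T) / y2 T * y2' x - exp (\<i> * k * complex_of_real x) * (\<i> * k))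
          \<le> (8 * M * (exp \<bar>x\<bar> + 1)) * norm (exp (\<i> * k * complex_of_real x))"
    and "norm (y1' x + (inverse \<rho> - y1 T) / y2 T * y2' x - exp (- \<i> * k * complex_of_real x) * (- \<i> * k))
          \<le> (8 * M * (exp \<bar>x\<bar> + 1)) * norm (exp (- \<i> * k * complex_of_real x))"
proof -
  have l: "l = k\<^sup>2" unfolding kd by (simp add: sqrt_cut_sq)
  have k0: "norm k > 0" using k by (auto simp: zero_less_norm_iff)
  have M0: "0 \<le> M" by (rule pot_M[OF p])
  have nl: "norm l = (norm k)\<^sup>2" unfolding l by (simp add: norm_power)
  obtain m mr where m: "wb 2 m" and mf: "\<forall>x. m x = 1 + Kop u k m x" and mr: "wb 2 mr"
    and mrf: "\<forall>x. mr x = 1 + Kop (\<lambda>t. u (- t)) k mr x"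
    and P1: "\<forall>x. y1 x + (\<rho> - y1 T) / y2 T * y2 x = Ffun k m x / m 0"
    and P2: "\<forall>x. y1' x + (\<rho> - y1 T) / y2 T * y2' x = Gfun u k m x / m 0"
    and P3: "\<forall>x. y1 x + (inverse \<rho> - y1 T) / y2 T * y2 x = Ffun k mr (- x) / mr 0"
    and P4: "\<forall>x. y1' x + (inverse \<rho> - y1 T) / y2 T * y2' x = - Gfun (\<lambda>t. u (- t)) k mr (- x) / mr 0"
    using good_k[OF p per T s1 s2 l k q kT rr] by blast
  have pr: "pot (\<lambda>t. u (- t)) M" by (rule pot_reflect[OF p])
  have db: "M * M / (norm k)\<^sup>2 + M / ((2 * Im k - 1) * norm k) \<le> (M * M + M / c) / (norm k)\<^sup>2"
    by (rule delta_bound[OF c k M0])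
  have fac: "0 \<le> exp \<bar>y\<bar> + 1 + M * \<bar>y\<bar>" for y using M0 by (intro add_nonneg_nonneg) auto
  define E where "E y = exp (\<i> * k * complex_of_real y)" for y
  have Em: "exp (- \<i> * k * complex_of_real x) = E (- x)" unfolding E_def by simp
  have key: "2 * (M * M / (norm k)\<^sup>2 + M / ((2 * Im k - 1) * norm k)) * (exp \<bar>x\<bar> + 1 + M * \<bar>x\<bar>) * norm (E y)
       \<le> (2 * (M * M + M / c) * (exp \<bar>x\<bar> + 1 + M * \<bar>x\<bar>)) * norm (E y / l)" for y
  proof -
    have "2 * (M * M / (norm k)\<^sup>2 + M / ((2 * Im k - 1) * norm k)) * (exp \<bar>x\<bar> + 1 + M * \<bar>x\<bar>) * norm (E y)
       \<le> 2 * ((M * M + M / c) / (norm k)\<^sup>2) * (exp \<bar>x\<bar> + 1 + M * \<bar>x\<bar>) * norm (E y)"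
      by (intro mult_right_mono mult_left_mono db fac norm_ge_zero) auto
    also have "\<dots> = (2 * (M * M + M / c) * (exp \<bar>x\<bar> + 1 + M * \<bar>x\<bar>)) * norm (E y / l)"
      unfolding norm_divide nl by simp
    finally show ?thesis .
  qed
  have ef: "norm (Ffun k m x / m 0 - E x * (1 + J 0 x (\<lambda>t. complex_of_real (u t)) / (2 * \<i> * k)))
     \<le> norm (E x) * (2 * (M * M / (norm k)\<^sup>2 + M / ((2 * Im k - 1) * norm k)) * (exp \<bar>x\<bar> + 1 + M * \<bar>x\<bar>))"
    unfolding E_def by (rule est_F[OF p k q m mf[rule_format]])
  show "norm (y1 x + (\<rho> - y1 T) / y2 T * y2 x - exp (\<i> * k * complex_of_real x) * (1 + J 0 x (\<lambda>t. complex_of_real (u t)) / (2 * \<i> * k)))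
          \<le> (2 * (M * M + M / c) * (exp \<bar>x\<bar> + 1 + M * \<bar>x\<bar>)) * norm (exp (\<i> * k * complex_of_real x) / l)"
    using P1 ef key[of x] unfolding E_def by (simp add: mult_ac)
  have Ur: "J 0 (- x) (\<lambda>t. complex_of_real (u (- t))) = - J 0 x (\<lambda>t. complex_of_real (u t))"
    using J_reflect[of 0 x "\<lambda>t. complex_of_real (u (- t))"] by simp
  have efr: "norm (Ffun k mr (- x) / mr 0 - E (- x) * (1 + J 0 (- x) (\<lambda>t. complex_of_real (u (- t))) / (2 * \<i> * k)))
     \<le> norm (E (- x)) * (2 * (M * M / (norm k)\<^sup>2 + M / ((2 * Im k - 1) * norm k)) * (exp \<bar>- x\<bar> + 1 + M * \<bar>- x\<bar>))"
    unfolding E_def by (rule est_F[OF pr k q mr mrf[rule_format]])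
  show "norm (y1 x + (inverse \<rho> - y1 T) / y2 T * y2 x - exp (- \<i> * k * complex_of_real x) * (1 - J 0 x (\<lambda>t. complex_of_real (u t)) / (2 * \<i> * k)))
          \<le> (2 * (M * M + M / c) * (exp \<bar>x\<bar> + 1 + M * \<bar>x\<bar>)) * norm (exp (- \<i> * k * complex_of_real x) / l)"
    using P3 efr key[of "- x"] unfolding Em Ur by (simp add: mult_ac)
  have eg: "norm (Gfun u k m x / m 0 - E x * (\<i> * k)) \<le> norm (E x) * (8 * M * (exp \<bar>x\<bar> + 1))"
    unfolding E_def by (rule est_G[OF p k q m mf[rule_format]])
  show "norm (y1' x + (\<rho> - y1 T) / y2 T * y2' x - exp (\<i> * k * complex_of_real x) * (\<i> * k))
          \<le> (8 * M * (exp \<bar>x\<bar> + 1)) * norm (exp (\<i> * k * complex_of_real x))"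
    using P2 eg unfolding E_def by (simp add: mult_ac)
  have egr: "norm (Gfun (\<lambda>t. u (- t)) k mr (- x) / mr 0 - E (- x) * (\<i> * k)) \<le> norm (E (- x)) * (8 * M * (exp \<bar>- x\<bar> + 1))"
    unfolding E_def by (rule est_G[OF pr k q mr mrf[rule_format]])
  have "y1' x + (inverse \<rho> - y1 T) / y2 T * y2' x - E (- x) * (- \<i> * k)
     = - (Gfun (\<lambda>t. u (- t)) k mr (- x) / mr 0 - E (- x) * (\<i> * k))" using P4 by simp
  then have "norm (y1' x + (inverse \<rho> - y1 T) / y2 T * y2' x - E (- x) * (- \<i> * k))
     = norm (Gfun (\<lambda>t. u (- t)) k mr (- x) / mr 0 - E (- x) * (\<i> * k))" by (simp only: norm_minus_cancel)
  then show "norm (y1' x + (inverse \<rho> - y1 T) / y2 T * y2' x - exp (- \<i> * k * complex_of_real x) * (- \<i> * k))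
          \<le> (8 * M * (exp \<bar>x\<bar> + 1)) * norm (exp (- \<i> * k * complex_of_real x))"
    using egr unfolding Em by (simp add: mult_ac)
qed

lemma J_cong_AE:
  assumes "f \<in> borel_measurable borel" "g \<in> borel_measurable borel" "AE t in lborel. f t = g t"
  shows "J a b f = J a b g"
  unfolding J_def by (rule interval_integral_cong_AE[OF assms(1,2)]) (rule eventually_mono[OF assms(3)], simp)

theorem lemma1:
  fixes T :: real and u :: "real \<Rightarrow> real"
    and y1 y1' y2 y2' :: "real \<Rightarrow> complex \<Rightarrow> complex"
    and rho :: "complex \<Rightarrow> complex"
  assumes T_pos: "T > 0"
    and u_meas: "u \<in> borel_measurable lborel"
    and u_bdd: "\<exists>M. AE t in lborel. \<bar>u t\<bar> \<le> M"
    and u_per: "\<forall>t. u (t + T) = u t"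
    and sol1: "\<forall>l. is_sol u l 1 0 (\<lambda>x. y1 x l) (\<lambda>x. y1' x l)"
    and sol2: "\<forall>l. is_sol u l 0 1 (\<lambda>x. y2 x l) (\<lambda>x. y2' x l)"
    and rho_root: "\<forall>l. l \<notin> spec T y1 y2' \<longrightarrow>
         (rho l)\<^sup>2 - Delta T y1 y2' l * rho l + 1 = 0 \<and> norm (rho l) < 1"
    and rho_analytic: "rho analytic_on (- spec T y1 y2')"
    and s_pos: "s > 0"
  shows
   "(\<lambda>l. psi_plus T rho y1 y2 x l
        - exp (\<i> * sqrt_cut l * x) * (1 + (LBINT t=ereal 0..ereal x. u t) / (2 * \<i> * sqrt_cut l)))
      \<in> O[Omega_filter s](\<lambda>l. exp (\<i> * sqrt_cut l * x) / l)
    \<and> (\<lambda>l. psi_minus T rho y1 y2 x l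
        - exp (- \<i> * sqrt_cut l * x) * (1 - (LBINT t=ereal 0..ereal x. u t) / (2 * \<i> * sqrt_cut l)))
      \<in> O[Omega_filter s](\<lambda>l. exp (- \<i> * sqrt_cut l * x) / l)
    \<and> (\<lambda>l. dpsi_plus T rho y1 y2 y1' y2' x l - exp (\<i> * sqrt_cut l * x) * (\<i> * sqrt_cut l))
      \<in> O[Omega_filter s](\<lambda>l. exp (\<i> * sqrt_cut l * x))
    \<and> (\<lambda>l. dpsi_minus T rho y1 y2 y1' y2' x l - exp (- \<i> * sqrt_cut l * x) * (- \<i> * sqrt_cut l))
      \<in> O[Omega_filter s](\<lambda>l. exp (- \<i> * sqrt_cut l * x))"
proof -
  obtain M0 where M0: "AE t in lborel. \<bar>u t\<bar> \<le> M0" using u_bdd by blast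
  define M where "M = \<bar>M0\<bar>"
  define u0 where "u0 t = (if \<bar>u t\<bar> \<le> M then u t else 0)" for t
  have um[measurable]: "u \<in> borel_measurable borel" using u_meas by simp
  have u0m[measurable]: "u0 \<in> borel_measurable borel" unfolding u0_def by measurable
  have M0': "0 \<le> M" unfolding M_def by simp
  have pu: "pot u0 M" unfolding pot_def using u0m M0' by (auto simp: u0_def)
  have per0: "u0 (t + T) = u0 t" for t unfolding u0_def using u_per by simp
  have ae: "AE t in lborel. u t = u0 t"
    by (rule eventually_mono[OF M0]) (auto simp: u0_def M_def)
  have conv: "solp u0 l y y' \<and> y 0 = a \<and> y' 0 = b" if s: "is_sol u l a b y y'" for l a b y y'
  proof -
    note h = is_sol_solp[OF s]
    have ym[measurable]: "y \<in> borel_measurable borel" by (rule borel_measurable_continuous_onI[OF h(3)])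
    have Jeq: "J 0 x (\<lambda>t. (complex_of_real (u t) - l) * y t) = J 0 x (\<lambda>t. (complex_of_real (u0 t) - l) * y t)" for x
      by (rule J_cong_AE) (measurable, measurable, rule eventually_mono[OF ae], simp)
    have e1: "\<forall>x. y x = y 0 + J 0 x y'" using h(1) h(5) by simp
    have e2: "\<forall>x. y' x = y' 0 + J 0 x (\<lambda>t. (complex_of_real (u0 t) - l) * y t)" using h(2) h(6) by (simp add: Jeq)
    show ?thesis unfolding solp_def using h(1-4) e1 e2 by blast
  qed
  have s1: "solp u0 l (\<lambda>x. y1 x l) (\<lambda>x. y1' x l)" "y1 0 l = 1" "y1' 0 l = 0" for l
    using conv[OF sol1[rule_format, of l]] by auto
  have s2: "solp u0 l (\<lambda>x. y2 x l) (\<lambda>x. y2' x l)" "y2 0 l = 0" "y2' 0 l = 1" for l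
    using conv[OF sol2[rule_format, of l]] by auto
  have U: "complex_of_real (interval_lebesgue_integral lborel (ereal 0) (ereal x) u) = J 0 x (\<lambda>t. complex_of_real (u0 t))"
  proof -
    have "complex_of_real (interval_lebesgue_integral lborel (ereal 0) (ereal x) u) = J 0 x (\<lambda>t. complex_of_real (u t))"
      unfolding J_def by (rule interval_lebesgue_integral_of_real[symmetric])
    also have "\<dots> = J 0 x (\<lambda>t. complex_of_real (u0 t))"
      by (rule J_cong_AE) (measurable, measurable, rule eventually_mono[OF ae], simp)
    finally show ?thesis .
  qed
  define C1 where "C1 c = 2 * (M * M + M / c) * (exp \<bar>x\<bar> + 1 + M * \<bar>x\<bar>)" for c
  define C3 where "C3 = 8 * M * (exp \<bar>x\<bar> + 1)"
  have ev: "\<exists>c. \<forall>\<^sub>F l in Omega_filter s.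
      norm (psi_plus T rho y1 y2 x l
        - exp (\<i> * sqrt_cut l * x) * (1 + (LBINT t=ereal 0..ereal x. u t) / (2 * \<i> * sqrt_cut l)))
        \<le> C1 c * norm (exp (\<i> * sqrt_cut l * x) / l)
    \<and> norm (psi_minus T rho y1 y2 x l
        - exp (- \<i> * sqrt_cut l * x) * (1 - (LBINT t=ereal 0..ereal x. u t) / (2 * \<i> * sqrt_cut l)))
        \<le> C1 c * norm (exp (- \<i> * sqrt_cut l * x) / l)
    \<and> norm (dpsi_plus T rho y1 y2 y1' y2' x l - exp (\<i> * sqrt_cut l * x) * (\<i> * sqrt_cut l))
        \<le> C3 * norm (exp (\<i> * sqrt_cut l * x))
    \<and> norm (dpsi_minus T rho y1 y2 y1' y2' x l - exp (- \<i> * sqrt_cut l * x) * (- \<i> * sqrt_cut l))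
        \<le> C3 * norm (exp (- \<i> * sqrt_cut l * x))" (is "\<exists>c. \<forall>\<^sub>F l in Omega_filter s. ?P c l")
  proof (cases "s < pi")
    case False
    have "Omega s = {}" using Omega_prop(1)[OF _ s_pos] False by blast
    then show ?thesis unfolding Omega_filter_def by (auto simp: eventually_inf_principal)
  next
    case True
    define c where "c = sqrt ((1 - cos s) / 2)"
    have cs: "cos s < 1" using cos_mono_less_eq[of s 0] True s_pos by simp
    then have c0: "c > 0" unfolding c_def by simp
    define K0 where "K0 = max (1 / c) (max (4 * M + 1) (ln (1 + exp T) / (c * T) + 1))"
    have K0: "1 / c \<le> K0" "4 * M + 1 \<le> K0" "ln (1 + exp T) / (c * T) + 1 \<le> K0" unfolding K0_def by auto
    have K00: "0 < K0" using K0(2) M0' by linarith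
    show ?thesis
        unfolding Omega_filter_def eventually_inf_principal eventually_at_infinity
      proof (rule exI[of _ c], rule exI[of _ "K0\<^sup>2"], intro allI impI)
        fix l assume lR: "K0\<^sup>2 \<le> norm l" and lO: "l \<in> Omega s"
        define k where "k = sqrt_cut l"
        have nk: "norm k = sqrt (norm l)" unfolding k_def by (rule sqrt_cut_norm)
        have nkK: "K0 \<le> norm k" unfolding nk using real_sqrt_le_mono[OF lR] K00 by simp
        have "Im k = sqrt ((norm l - Re l) / 2)" unfolding k_def by (rule sqrt_cut_Im)
        also have "\<dots> \<ge> sqrt ((norm l - norm l * cos s) / 2)"
          using Omega_prop(2)[OF lO s_pos] by (intro real_sqrt_le_mono) auto
        finally have i1: "Im k \<ge> sqrt ((norm l - norm l * cos s) / 2)" .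
        have "(norm l - norm l * cos s) / 2 = norm l * ((1 - cos s) / 2)" by (simp add: algebra_simps)
        then have "sqrt ((norm l - norm l * cos s) / 2) = sqrt (norm l) * c" unfolding c_def by (simp only: real_sqrt_mult)
        then have ck: "Im k \<ge> c * norm k" using i1 unfolding nk by (simp add: mult.commute)
        have "c * K0 \<le> c * norm k" using nkK c0 by simp
        then have cK: "c * K0 \<le> Im k" using ck by linarith
        have "1 = c * (1 / c)" using c0 by simp
        also have "\<dots> \<le> c * K0" using K0(1) c0 by (intro mult_left_mono) auto
        finally have k1: "Im k \<ge> 1" using cK by linarith
        have q: "M / norm k \<le> 1/4"
        proof -
          have "4 * M \<le> norm k" using K0(2) nkK by linarith
          moreover have "norm k > 0" using K00 nkK by linarith
          ultimately show ?thesis by (simp add: divide_le_eq)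
        qed
        have kT: "exp (Im k * T) > 1 + exp T"
        proof -
          have "c * (ln (1 + exp T) / (c * T) + 1) \<le> c * K0" using K0(3) c0 by (intro mult_left_mono) auto
          also have "c * (ln (1 + exp T) / (c * T) + 1) = ln (1 + exp T) / T + c" using c0 T_pos by (simp add: field_simps)
          finally have "ln (1 + exp T) / T < Im k" using cK c0 by linarith
          then have "ln (1 + exp T) < Im k * T" using T_pos by (simp add: divide_less_eq)
          then have "exp (ln (1 + exp T)) < exp (Im k * T)" by (rule exp_less_mono)
          moreover have "exp (ln (1 + exp T)) = 1 + exp T" by (rule exp_ln) (simp add: add_pos_pos)
          ultimately show ?thesis by simp
        qed
        have rr: "(rho l)\<^sup>2 - (y1 T l + y2' T l) * rho l + 1 = 0 \<and> norm (rho l) < 1"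
          if H: "\<forall>r. l = complex_of_real r \<longrightarrow> y1 T l + y2' T l \<notin> complex_of_real ` {-2..2}"
        proof -
          have "l \<notin> spec T y1 y2'"
          proof
            assume "l \<in> spec T y1 y2'"
            then obtain r where "l = complex_of_real r" "Delta T y1 y2' (complex_of_real r) \<in> complex_of_real ` {-2..2}"
              unfolding spec_def by blast
            then show False using H unfolding Delta_def by auto
          qed
          then show ?thesis using rho_root unfolding Delta_def by blast
        qed
        note A = at_l[OF pu per0 T_pos s1[of l] s2[of l] rr k_def c0 ck k1 q kT, of x]
        show "?P c l"
          unfolding psi_plus_def psi_minus_def dpsi_plus_def dpsi_minus_def U C1_def C3_def k_def[symmetric]
          using A by blast
      qed
  qed
  then obtain c where ev: "\<forall>\<^sub>F l in Omega_filter s.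
      norm (psi_plus T rho y1 y2 x l
        - exp (\<i> * sqrt_cut l * x) * (1 + (LBINT t=ereal 0..ereal x. u t) / (2 * \<i> * sqrt_cut l)))
        \<le> C1 c * norm (exp (\<i> * sqrt_cut l * x) / l)
    \<and> norm (psi_minus T rho y1 y2 x l
        - exp (- \<i> * sqrt_cut l * x) * (1 - (LBINT t=ereal 0..ereal x. u t) / (2 * \<i> * sqrt_cut l)))
        \<le> C1 c * norm (exp (- \<i> * sqrt_cut l * x) / l)
    \<and> norm (dpsi_plus T rho y1 y2 y1' y2' x l - exp (\<i> * sqrt_cut l * x) * (\<i> * sqrt_cut l))
        \<le> C3 * norm (exp (\<i> * sqrt_cut l * x))
    \<and> norm (dpsi_minus T rho y1 y2 y1' y2' x l - exp (- \<i> * sqrt_cut l * x) * (- \<i> * sqrt_cut l))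
        \<le> C3 * norm (exp (- \<i> * sqrt_cut l * x))" by blast
  show ?thesis
  proof (intro conjI)
    show "(\<lambda>l. psi_plus T rho y1 y2 x l
        - exp (\<i> * sqrt_cut l * x) * (1 + (LBINT t=ereal 0..ereal x. u t) / (2 * \<i> * sqrt_cut l)))
      \<in> O[Omega_filter s](\<lambda>l. exp (\<i> * sqrt_cut l * x) / l)"
      by (rule bigoI[OF eventually_mono[OF ev]]) blast
    show "(\<lambda>l. psi_minus T rho y1 y2 x l
        - exp (- \<i> * sqrt_cut l * x) * (1 - (LBINT t=ereal 0..ereal x. u t) / (2 * \<i> * sqrt_cut l)))
      \<in> O[Omega_filter s](\<lambda>l. exp (- \<i> * sqrt_cut l * x) / l)"
      by (rule bigoI[OF eventually_mono[OF ev]]) blast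
    show "(\<lambda>l. dpsi_plus T rho y1 y2 y1' y2' x l - exp (\<i> * sqrt_cut l * x) * (\<i> * sqrt_cut l))
      \<in> O[Omega_filter s](\<lambda>l. exp (\<i> * sqrt_cut l * x))"
      by (rule bigoI[OF eventually_mono[OF ev]]) blast
    show "(\<lambda>l. dpsi_minus T rho y1 y2 y1' y2' x l - exp (- \<i> * sqrt_cut l * x) * (- \<i> * sqrt_cut l))
      \<in> O[Omega_filter s](\<lambda>l. exp (- \<i> * sqrt_cut l * x))"
      by (rule bigoI[OF eventually_mono[OF ev]]) blast
  qed
qed


end
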